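(* Let $L,K,N_t,\tau$ be positive integers. Index users by pairs $(i,j)$ with $i\in\{1,\dots,L\}$ (cell) and $j\in\{1,\dots,K\}$ (user within the cell). For every user $(i,j)$ and every cell $l$, let $\mathbf{h}_{i_jl}\in\mathbb{C}^{N_t}$ be a random vector with distribution $\mathcal{CN}(\mathbf{0},\mathbf{I}_{N_t})$, all these vectors being mutually independent. For each $l$, let $\mathbf{n}_l\in\mathbb{C}^{\tau N_t}$ be a zero-mean random vector with covariance $\sigma_{n_l}^2\mathbf{I}_{\tau N_t}$, independent of all channel vectors and of the other noise vectors. Let $\mathbf{q}_{i_j}\in\mathbb{R}^{\tau}$ be unit-norm pilot sequences, $\mathbf{Q}_{i_j}=\mathbf{q}_{i_j}\otimes\mathbf{I}_{N_t}$, and $\rho_{i_jl_k}=\mathbf{q}_{l_k}^T\mathbf{q}_{i_j}$. Let $\eta_{i_jl}\ge 0$ be real numbers with $\eta_{l_kl}=1$ for all $l,k$. Define the least-squares channel estimate $$\hat{\mathbf{g}}_{l_kl}=\mathbf{h}_{l_kl}+\sum_{(i,j)\neq(l,k)}\eta_{i_jl}\rho_{i_jl_k}\mathbf{h}_{i_jl}+\mathbf{Q}_{l_k}^T\mathbf{n}_l,$$ the constant $\delta_{l_k}=\sum_{i=1}^L\sum_{j=1}^K\eta_{i_jl}^2\rho_{i_jl_k}^2+\sigma_{n_l}^2$, and the MRT precoder $\mathbf{a}_{l_k}=\hat{\mathbf{g}}_{l_kl}/\sqrt{N_t\delta_{l_k}}$. Let $\beta_{l_km}>0$ (large-scale gains),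 $P_{m_n}>0$ (downlink powers) and $\sigma_w^2\ge 0$, and define the achievable SINR of user $(l,k)$ as $$\phi_{l_k,N_t}=\frac{\left(\mathbb{E}\left[\mathbf{h}_{l_kl}^H\mathbf{a}_{l_k}\right]\right)^2\beta_{l_kl}P_{l_k}}{\mathrm{var}\left[\mathbf{h}_{l_kl}^H\mathbf{a}_{l_k}\right]\beta_{l_kl}P_{l_k}+\sum_{(m,n)\neq(l,k)}\mathbb{E}\left[|\mathbf{h}_{l_km}^H\mathbf{a}_{m_n}|^2\right]\beta_{l_km}P_{m_n}+\sigma_w^2},$$ where expectations and variance are over all channel and noise vectors. Then $$\phi_{l_k,N_t}=\frac{\beta_{l_kl}P_{l_k}}{\delta_{l_k}\left[\sum_{(m,n)\neq(l,k)}\frac{\rho_{l_km_n}^2\eta_{l_km}^2\beta_{l_km}P_{m_n}}{\delta_{m_n}}+\frac{1}{N_t}\overline{P}_{lk}\right]},\qquad \overline{P}_{lk}=\sum_{m=1}^L\sum_{n=1}^K\beta_{l_km}P_{m_n}+\sigma_w^2,$$ where $\delta_{m_n}=\sum_{i=1}^L\sum_{j=1}^K\eta_{i_jm}^2\rho_{i_jm_n}^2+\sigma_{n_m}^2$ and $\rho_{l_km_n}=\mathbf{q}_{m_n}^T\mathbf{q}_{l_k}$.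
   Context: Model: an $L$-cell TDD massive MIMO network, each cell having an $N_t$-antenna base station serving $K$ single-antenna users. $\mathbf{h}_{i_jl}$ is the small-scale fading vector from user $j$ of cell $i$ to the base station of cell $l$; $\eta_{i_jl}$ is the effective uplink pilot amplitude of that link (uplink power control makes $\eta_{l_kl}=1$); $\rho_{i_jl_k}$ is the correlation coefficient between pilot sequences. Sums written $\sum_{(m,n)\neq(l,k)}$ range over all $m\in\{1,\dots,L\}$, $n\in\{1,\dots,K\}$ with $(m,n)\neq(l,k)$. *)

theory Defs
  imports "HOL-Probability.Probability"
begin

text \<open>Standard circularly-symmetric complex Gaussian CN(0,1): real and imaginary
parts independent, each N(0,1/2).\<close>
definition cn_std :: "complex measure" where
  "cn_std = distr (density lborel (normal_density 0 (sqrt (1/2)))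
                    \<Otimes>\<^sub>M density lborel (normal_density 0 (sqrt (1/2))))
                 borel (\<lambda>(x, y). Complex x y)"

definition users :: "nat \<Rightarrow> nat \<Rightarrow> (nat \<times> nat) set" where
  "users L K = {1..L} \<times> {1..K}"

text \<open>Random blocks: channel vectors h_{i_j m} (Inl (i,j,m)), each in C^Nt,
and noise vectors n_m (Inr m), each in C^(tau*Nt).\<close>
definition blocks :: "nat \<Rightarrow> nat \<Rightarrow> ((nat \<times> nat \<times> nat) + nat) set" where
  "blocks L K = Inl ` ({1..L} \<times> {1..K} \<times> {1..L}) \<union> Inr ` {1..L}"

definition block_space :: "nat \<Rightarrow> nat \<Rightarrow> ((nat \<times> nat \<times> nat) + nat) \<Rightarrow> (nat \<Rightarrow> complex) measure" where
  "block_space Nt tau b = (case b of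
      Inl _ \<Rightarrow> Pi\<^sub>M {..<Nt} (\<lambda>_. borel)
    | Inr _ \<Rightarrow> Pi\<^sub>M {..<tau * Nt} (\<lambda>_. borel))"

definition block_rv :: "nat \<Rightarrow> nat \<Rightarrow> (nat \<Rightarrow> nat \<Rightarrow> nat \<Rightarrow> nat \<Rightarrow> 'a \<Rightarrow> complex)
    \<Rightarrow> (nat \<Rightarrow> nat \<Rightarrow> 'a \<Rightarrow> complex) \<Rightarrow> ((nat \<times> nat \<times> nat) + nat) \<Rightarrow> 'a \<Rightarrow> (nat \<Rightarrow> complex)" where
  "block_rv Nt tau h nz b \<omega> = (case b of
      Inl (i, j, m) \<Rightarrow> restrict (\<lambda>r. h i j m r \<omega>) {..<Nt}
    | Inr m \<Rightarrow> restrict (\<lambda>a. nz m a \<omega>) {..<tau * Nt})"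

definition rho :: "nat \<Rightarrow> (nat \<Rightarrow> nat \<Rightarrow> nat \<Rightarrow> real) \<Rightarrow> nat \<Rightarrow> nat \<Rightarrow> nat \<Rightarrow> nat \<Rightarrow> real" where
  "rho tau q i j l k = (\<Sum>t<tau. q l k t * q i j t)"

text \<open>LS channel estimate, component r (0 <= r < Nt):
  h_{l_k l} + sum_{(i,j) ~= (l,k)} eta rho h_{i_j l} + (Q_{l_k}^T n_l), where
  Q = q (x) I_Nt, so (Q^T n)_r = sum_t q_t n_{t*Nt + r}.\<close>
definition ghat where
  "ghat L K Nt tau h nz q eta l k r \<omega> =
     h l k l r \<omega>
   + (\<Sum>(i, j)\<in>users L K - {(l, k)}. complex_of_real (eta i j l * rho tau q i j l k) * h i j l r \<omega>)
   + (\<Sum>t<tau. complex_of_real (q l k t) * nz l (t * Nt + r) \<omega>)"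

definition delta where
  "delta L K tau q (eta :: nat \<Rightarrow> nat \<Rightarrow> nat \<Rightarrow> real) (sn :: nat \<Rightarrow> real) l k =
     (\<Sum>i=1..L. \<Sum>j=1..K. (eta i j l)\<^sup>2 * (rho tau q i j l k)\<^sup>2) + (sn l)\<^sup>2"

definition precoder where
  "precoder L K Nt tau h nz q eta sn l k r \<omega> =
     ghat L K Nt tau h nz q eta l k r \<omega> / complex_of_real (sqrt (real Nt * delta L K tau q eta sn l k))"

definition hHa where
  "hHa L K Nt tau h nz q eta sn l k m n \<omega> =
     (\<Sum>r<Nt. cnj (h l k m r \<omega>) * precoder L K Nt tau h nz q eta sn m n r \<omega>)"

definition cvar :: "'a measure \<Rightarrow> ('a \<Rightarrow> complex) \<Rightarrow> real" where
  "cvar M X = (\<integral>\<omega>. (cmod (X \<omega> - (\<integral>\<omega>'. X \<omega>' \<partial>M)))\<^sup>2 \<partial>M)"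

definition sinr where
  "sinr M L K Nt tau h nz q eta sn (beta :: nat \<Rightarrow> nat \<Rightarrow> nat \<Rightarrow> real) (P :: nat \<Rightarrow> nat \<Rightarrow> real) (sw2 :: real) l k =
     ((cmod (\<integral>\<omega>. hHa L K Nt tau h nz q eta sn l k l k \<omega> \<partial>M))\<^sup>2 * beta l k l * P l k)
   / (cvar M (hHa L K Nt tau h nz q eta sn l k l k) * beta l k l * P l k
      + (\<Sum>(m, n)\<in>users L K - {(l, k)}.
           (\<integral>\<omega>. (cmod (hHa L K Nt tau h nz q eta sn l k m n \<omega>))\<^sup>2 \<partial>M) * beta l k m * P m n)
      + sw2)"

end

theory Submission
  imports Defs
begin

definition Nd :: "real measure" where "Nd = density lborel (normal_density 0 (sqrt (1/2)))"

lemma Nd_prob: "prob_space Nd"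
  unfolding Nd_def by (rule prob_space_normal_density) simp

lemma Nd_int: "integrable Nd (\<lambda>x. x ^ k)"
  unfolding Nd_def
  using integrable_normal_moment[of "sqrt (1/2)" 0 k] by (subst integrable_density) auto

lemma Nd_mom: "integral\<^sup>L Nd (\<lambda>x. x ^ k) = integral\<^sup>L lborel (\<lambda>x. normal_density 0 (sqrt (1/2)) x * x ^ k)"
  unfolding Nd_def by (subst integral_density) auto

lemma Nd_odd: "integral\<^sup>L Nd (\<lambda>x. x ^ (2*k+1)) = 0"
  unfolding Nd_mom using integral_normal_moment_odd[of "sqrt (1/2)" 0 k] by simp

lemma Nd_2: "integral\<^sup>L Nd (\<lambda>x. x ^ 2) = 1/2"
  unfolding Nd_mom using integral_normal_moment_even[of "sqrt (1/2)" 0 1] by simp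

lemma Nd_4: "integral\<^sup>L Nd (\<lambda>x. x ^ 4) = 3/4"
  unfolding Nd_mom using integral_normal_moment_even[of "sqrt (1/2)" 0 2] by (simp add: fact_numeral)
lemma (in pair_sigma_finite) pint:
  fixes f g :: "_ \<Rightarrow> real"
  assumes f: "integrable M1 f" and g: "integrable M2 g"
  shows "integrable (M1 \<Otimes>\<^sub>M M2) (\<lambda>x. f (fst x) * g (snd x))"
    and "(\<integral>x. f (fst x) * g (snd x) \<partial>(M1 \<Otimes>\<^sub>M M2)) = integral\<^sup>L M1 f * integral\<^sup>L M2 g"
proof -
  have fm[measurable]: "f \<in> borel_measurable M1" using f by auto
  have gm[measurable]: "g \<in> borel_measurable M2" using g by auto
  have "(\<integral>\<^sup>+ x. ennreal (norm (f (fst x) * g (snd x))) \<partial>(M1 \<Otimes>\<^sub>M M2))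
      = (\<integral>\<^sup>+ x. \<integral>\<^sup>+ y. ennreal (norm (f x)) * ennreal (norm (g y)) \<partial>M2 \<partial>M1)"
    by (subst M2.nn_integral_fst[symmetric]) (auto simp: abs_mult ennreal_mult)
  also have "\<dots> = (\<integral>\<^sup>+ x. ennreal (norm (f x)) * (\<integral>\<^sup>+ y. ennreal (norm (g y)) \<partial>M2) \<partial>M1)"
    by (intro nn_integral_cong nn_integral_cmult) auto
  also have "\<dots> = (\<integral>\<^sup>+ x. ennreal (norm (f x)) \<partial>M1) * (\<integral>\<^sup>+ y. ennreal (norm (g y)) \<partial>M2)"
    by (rule nn_integral_multc) auto
  also have "\<dots> < \<infinity>" using f g unfolding integrable_iff_bounded
    by (simp add: ennreal_mult_less_top)
  finally show int: "integrable (M1 \<Otimes>\<^sub>M M2) (\<lambda>x. f (fst x) * g (snd x))"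
    by (intro integrableI_bounded) auto
  have "(\<integral>x. f (fst x) * g (snd x) \<partial>(M1 \<Otimes>\<^sub>M M2)) = (\<integral>x. (\<integral>y. f x * g y \<partial>M2) \<partial>M1)"
    using integral_fst'[OF int] by simp
  also have "\<dots> = (\<integral>x. f x * integral\<^sup>L M2 g \<partial>M1)" by simp
  also have "\<dots> = integral\<^sup>L M1 f * integral\<^sup>L M2 g" by simp
  finally show "(\<integral>x. f (fst x) * g (snd x) \<partial>(M1 \<Otimes>\<^sub>M M2)) = integral\<^sup>L M1 f * integral\<^sup>L M2 g" .
qed

interpretation NN: pair_prob_space Nd Nd
  by (simp add: Nd_prob pair_prob_space.intro pair_sigma_finite.intro prob_space_imp_sigma_finite)

lemma NN_int: "integrable (Nd \<Otimes>\<^sub>M Nd) (\<lambda>p. fst p ^ a * snd p ^ b)"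
  by (rule NN.pint(1)[OF Nd_int Nd_int])
lemma NN_integral: "(\<integral>p. fst p ^ a * snd p ^ b \<partial>(Nd \<Otimes>\<^sub>M Nd)) = integral\<^sup>L Nd (\<lambda>x. x^a) * integral\<^sup>L Nd (\<lambda>x. x^b)"
  by (rule NN.pint(2)[OF Nd_int Nd_int])

lemma cn_std_alt: "cn_std = distr (Nd \<Otimes>\<^sub>M Nd) borel (\<lambda>p. Complex (fst p) (snd p))"
  unfolding cn_std_def Nd_def by (simp add: case_prod_beta')

lemma cn_meas: "(\<lambda>p. Complex (fst p) (snd p)) \<in> measurable (Nd \<Otimes>\<^sub>M Nd) borel"
proof -
  have "(\<lambda>p. Complex (fst p) (snd p)) = (\<lambda>p. complex_of_real (fst p) + \<i> * complex_of_real (snd p))"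
    by (auto simp: complex_eq_iff)
  moreover have "(\<lambda>p. complex_of_real (fst p) + \<i> * complex_of_real (snd p)) \<in> borel_measurable (Nd \<Otimes>\<^sub>M Nd)"
    unfolding Nd_def by measurable
  ultimately show ?thesis by simp
qed

lemma cn_prob: "prob_space cn_std"
  unfolding cn_std_alt by (rule prob_space.prob_space_distr[OF _ cn_meas]) (rule NN.P.prob_space_axioms)

lemma cn_int_iff: fixes f :: "complex \<Rightarrow> complex" assumes "f \<in> borel_measurable borel" shows
   "integrable cn_std f \<longleftrightarrow> integrable (Nd \<Otimes>\<^sub>M Nd) (\<lambda>p. f (Complex (fst p) (snd p)))"
  unfolding cn_std_alt by (rule integrable_distr_eq[OF cn_meas assms])

lemma cn_integral: fixes f :: "complex \<Rightarrow> complex" assumes "f \<in> borel_measurable borel" shows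
   "integral\<^sup>L cn_std f = integral\<^sup>L (Nd \<Otimes>\<^sub>M Nd) (\<lambda>p. f (Complex (fst p) (snd p)))"
  unfolding cn_std_alt by (rule integral_distr[OF cn_meas assms])

lemma Nd_1: "integral\<^sup>L Nd (\<lambda>x. x ^ 1) = 0" using Nd_odd[of 0] by simp
lemma Nd_3: "integral\<^sup>L Nd (\<lambda>x. x ^ 3) = 0" using Nd_odd[of 1] by (simp add: numeral_3_eq_3)
lemma Nd_0: "integral\<^sup>L Nd (\<lambda>x. x ^ 0) = 1" using prob_space.prob_space[OF Nd_prob] by simp

lemmas NNmom = NN_integral Nd_0 Nd_1 Nd_2 Nd_3 Nd_4

lemmas NNI = Bochner_Integration.integrable_add integrable_mult_right integrable_of_real NN_int

lemma cnj_meas[measurable]: "(cnj :: complex \<Rightarrow> complex) \<in> borel_measurable borel"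
  by (intro borel_measurable_continuous_onI continuous_intros)

lemma cn_z: "integrable cn_std (\<lambda>z. z)" "integral\<^sup>L cn_std (\<lambda>z. z) = 0"
proof -
  have m: "(\<lambda>z::complex. z) \<in> borel_measurable borel" by measurable
  have e: "(\<lambda>p. Complex (fst p) (snd p)) = (\<lambda>p. complex_of_real (fst p) + \<i> * complex_of_real (snd p))"
    by (auto simp: complex_eq_iff)
  have i1: "integrable (Nd \<Otimes>\<^sub>M Nd) (\<lambda>p. fst p)" using NN_int[of 1 0] by simp
  have i2: "integrable (Nd \<Otimes>\<^sub>M Nd) (\<lambda>p. snd p)" using NN_int[of 0 1] by simp
  have a1: "integral\<^sup>L (Nd \<Otimes>\<^sub>M Nd) (\<lambda>p. fst p) = 0" using NN_integral[of 1 0] Nd_1 by simp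
  have a2: "integral\<^sup>L (Nd \<Otimes>\<^sub>M Nd) (\<lambda>p. snd p) = 0" using NN_integral[of 0 1] Nd_1 by simp
  show "integrable cn_std (\<lambda>z. z)"
    unfolding cn_int_iff[OF m] e using i1 i2 by (intro NNI) auto
  show "integral\<^sup>L cn_std (\<lambda>z. z) = 0"
    unfolding cn_integral[OF m] e using i1 i2 a1 a2 by simp
qed

lemma cn_zz: "integrable cn_std (\<lambda>z. cnj z * z)" "integral\<^sup>L cn_std (\<lambda>z. cnj z * z) = 1"
proof -
  have m: "(\<lambda>z::complex. cnj z * z) \<in> borel_measurable borel" by measurable
  have e: "(\<lambda>p. cnj (Complex (fst p) (snd p)) * Complex (fst p) (snd p)) = (\<lambda>p. complex_of_real (fst p ^ 2 * snd p ^ 0) + complex_of_real (fst p ^ 0 * snd p ^ 2))"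
    by (auto simp: complex_eq_iff power2_eq_square)
  show "integrable cn_std (\<lambda>z. cnj z * z)"
    unfolding cn_int_iff[OF m] e by (intro NNI)
  show "integral\<^sup>L cn_std (\<lambda>z. cnj z * z) = 1"
    unfolding cn_integral[OF m] e by (simp add: NNI NNmom del: power_0 of_real_mult of_real_power)
qed

lemma cn_zz2: "integrable cn_std (\<lambda>z. (cnj z * z) * (cnj z * z))" "integral\<^sup>L cn_std (\<lambda>z. (cnj z * z) * (cnj z * z)) = 2"
proof -
  have m: "(\<lambda>z::complex. (cnj z * z) * (cnj z * z)) \<in> borel_measurable borel" by measurable
  have e: "(\<lambda>p. (cnj (Complex (fst p) (snd p)) * Complex (fst p) (snd p)) * (cnj (Complex (fst p) (snd p)) * Complex (fst p) (snd p)))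
     = (\<lambda>p. complex_of_real (fst p ^ 4 * snd p ^ 0) + 2 * complex_of_real (fst p ^ 2 * snd p ^ 2) + complex_of_real (fst p ^ 0 * snd p ^ 4))"
    by (auto simp: complex_eq_iff power2_eq_square algebra_simps power4_eq_xxxx)
  show "integrable cn_std (\<lambda>z. (cnj z * z) * (cnj z * z))"
    unfolding cn_int_iff[OF m] e by (intro NNI)
  show "integral\<^sup>L cn_std (\<lambda>z. (cnj z * z) * (cnj z * z)) = 2"
    unfolding cn_integral[OF m] e by (simp add: NNI NNmom del: power_0 of_real_mult of_real_power)
qed

lemma cn_zz1: "integrable cn_std (\<lambda>z. (cnj z * z) * z)"
proof -
  have m: "(\<lambda>z::complex. (cnj z * z) * z) \<in> borel_measurable borel" by measurable
  have e: "(\<lambda>p. (cnj (Complex (fst p) (snd p)) * Complex (fst p) (snd p)) * Complex (fst p) (snd p))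
     = (\<lambda>p. complex_of_real (fst p ^ 3 * snd p ^ 0) + complex_of_real (fst p ^ 1 * snd p ^ 2)
         + \<i> * complex_of_real (fst p ^ 2 * snd p ^ 1) + \<i> * complex_of_real (fst p ^ 0 * snd p ^ 3))"
    by (auto simp: complex_eq_iff power2_eq_square algebra_simps power3_eq_cube)
  show "integrable cn_std (\<lambda>z. (cnj z * z) * z)"
    unfolding cn_int_iff[OF m] e by (intro NNI)
qed



lemma cn_meas_sets: "sets cn_std = sets borel"
  unfolding cn_std_def by simp

lemma cn_borel: "integrable cn_std f \<Longrightarrow> f \<in> borel_measurable borel"
  using measurable_cong_sets[OF cn_meas_sets refl] borel_measurable_integrable by blast

lemma int_sum2:
  fixes F :: "'i \<Rightarrow> 'j \<Rightarrow> 'a \<Rightarrow> complex"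
  assumes "\<And>r s. r \<in> A \<Longrightarrow> s \<in> B \<Longrightarrow> integrable M (F r s)"
  shows "(\<integral>\<omega>. (\<Sum>r\<in>A. \<Sum>s\<in>B. F r s \<omega>) \<partial>M) = (\<Sum>r\<in>A. \<Sum>s\<in>B. integral\<^sup>L M (F r s))"
    and "integrable M (\<lambda>\<omega>. \<Sum>r\<in>A. \<Sum>s\<in>B. F r s \<omega>)"
proof -
  show "integrable M (\<lambda>\<omega>. \<Sum>r\<in>A. \<Sum>s\<in>B. F r s \<omega>)"
    using assms by (auto intro!: Bochner_Integration.integrable_sum)
  have "(\<integral>\<omega>. (\<Sum>r\<in>A. \<Sum>s\<in>B. F r s \<omega>) \<partial>M) = (\<Sum>r\<in>A. \<integral>\<omega>. (\<Sum>s\<in>B. F r s \<omega>) \<partial>M)"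
    using assms by (intro Bochner_Integration.integral_sum) (auto intro!: Bochner_Integration.integrable_sum)
  also have "\<dots> = (\<Sum>r\<in>A. \<Sum>s\<in>B. integral\<^sup>L M (F r s))"
    using assms by (intro sum.cong refl Bochner_Integration.integral_sum) auto
  finally show "(\<integral>\<omega>. (\<Sum>r\<in>A. \<Sum>s\<in>B. F r s \<omega>) \<partial>M) = (\<Sum>r\<in>A. \<Sum>s\<in>B. integral\<^sup>L M (F r s))" .
qed

interpretation CN: prob_space cn_std by (rule cn_prob)

interpretation CNP: product_sigma_finite "\<lambda>_::nat. cn_std"
  by (simp add: cn_prob product_sigma_finite_def prob_space_imp_sigma_finite)

lemma cvar_alt:
  fixes X :: "'b \<Rightarrow> complex"
  assumes P: "prob_space N" and i1: "integrable N X" and i2: "integrable N (\<lambda>\<omega>. X \<omega> * cnj (X \<omega>))"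
  shows "cvar N X = (\<integral>\<omega>. (cmod (X \<omega>))\<^sup>2 \<partial>N) - (cmod (integral\<^sup>L N X))\<^sup>2"
proof -
  interpret prob_space N by (rule P)
  let ?\<mu> = "integral\<^sup>L N X"
  have e: "\<And>\<omega>. complex_of_real ((cmod (X \<omega> - ?\<mu>))\<^sup>2) = X \<omega> * cnj (X \<omega>) - X \<omega> * cnj ?\<mu> - ?\<mu> * cnj (X \<omega>) + ?\<mu> * cnj ?\<mu>"
    unfolding complex_norm_square by (simp add: algebra_simps)
  have "complex_of_real (cvar N X) = (\<integral>\<omega>. complex_of_real ((cmod (X \<omega> - ?\<mu>))\<^sup>2) \<partial>N)"
    unfolding cvar_def by (rule integral_complex_of_real[symmetric])
  also have "\<dots> = (\<integral>\<omega>. X \<omega> * cnj (X \<omega>) \<partial>N) - ?\<mu> * cnj ?\<mu> - ?\<mu> * cnj ?\<mu> + ?\<mu> * cnj ?\<mu>"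
    unfolding e using i1 i2 by (simp add: integral_cnj prob_space)
  also have "\<dots> = (\<integral>\<omega>. X \<omega> * cnj (X \<omega>) \<partial>N) - ?\<mu> * cnj ?\<mu>" by simp
  also have "\<dots> = complex_of_real ((\<integral>\<omega>. (cmod (X \<omega>))\<^sup>2 \<partial>N) - (cmod ?\<mu>)\<^sup>2)"
    unfolding of_real_diff complex_norm_square integral_complex_of_real[symmetric] by simp
  finally show ?thesis by (simp only: of_real_eq_iff)
qed

locale sys =
  fixes M :: "'a measure" and L K Nt tau :: nat
    and h :: "nat \<Rightarrow> nat \<Rightarrow> nat \<Rightarrow> nat \<Rightarrow> 'a \<Rightarrow> complex"
    and nz :: "nat \<Rightarrow> nat \<Rightarrow> 'a \<Rightarrow> complex"
    and sn :: "nat \<Rightarrow> real"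
  assumes PS: "prob_space M"
    and indep: "prob_space.indep_vars M (block_space Nt tau) (block_rv Nt tau h nz) (blocks L K)"
    and chan: "\<forall>i\<in>{1..L}. \<forall>j\<in>{1..K}. \<forall>m\<in>{1..L}.
        distr M (Pi\<^sub>M {..<Nt} (\<lambda>_. borel)) (\<lambda>\<omega>. restrict (\<lambda>r. h i j m r \<omega>) {..<Nt})
          = Pi\<^sub>M {..<Nt} (\<lambda>_. cn_std)"
    and noise_mean: "\<forall>m\<in>{1..L}. \<forall>a<tau * Nt.
        integrable M (nz m a) \<and> (\<integral>\<omega>. nz m a \<omega> \<partial>M) = 0"
    and noise_cov: "\<forall>m\<in>{1..L}. \<forall>a<tau * Nt. \<forall>b<tau * Nt.
        integrable M (\<lambda>\<omega>. nz m a \<omega> * cnj (nz m b \<omega>)) \<and>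
        (\<integral>\<omega>. nz m a \<omega> * cnj (nz m b \<omega>) \<partial>M) = (if a = b then complex_of_real ((sn m)\<^sup>2) else 0)"
begin

sublocale prob_space M by (rule PS)

lemma hvec_meas:
  assumes "i \<in> {1..L}" "j \<in> {1..K}" "m \<in> {1..L}"
  shows "(\<lambda>\<omega>. restrict (\<lambda>r. h i j m r \<omega>) {..<Nt}) \<in> measurable M (Pi\<^sub>M {..<Nt} (\<lambda>_. borel))"
proof -
  have "Inl (i,j,m) \<in> blocks L K" using assms unfolding blocks_def by auto
  then have "random_variable (block_space Nt tau (Inl (i,j,m))) (block_rv Nt tau h nz (Inl (i,j,m)))"
    using indep unfolding indep_vars_def by auto
  then show ?thesis unfolding block_space_def block_rv_def by simp
qed

lemma HM:
  fixes F :: "nat \<Rightarrow> complex \<Rightarrow> complex"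
  assumes "i \<in> {1..L}" "j \<in> {1..K}" "m \<in> {1..L}"
    and FI: "\<And>r. r < Nt \<Longrightarrow> integrable cn_std (F r)"
  shows "integrable M (\<lambda>\<omega>. \<Prod>r<Nt. F r (h i j m r \<omega>))"
    and "(\<integral>\<omega>. (\<Prod>r<Nt. F r (h i j m r \<omega>)) \<partial>M) = (\<Prod>r<Nt. integral\<^sup>L cn_std (F r))"
proof -
  let ?V = "\<lambda>\<omega>. restrict (\<lambda>r. h i j m r \<omega>) {..<Nt}"
  let ?G = "\<lambda>x. \<Prod>r<Nt. F r (x r)"
  have Vm: "?V \<in> measurable M (Pi\<^sub>M {..<Nt} (\<lambda>_. borel))" using hvec_meas assms by blast
  have Fm[measurable]: "\<And>r. r < Nt \<Longrightarrow> F r \<in> borel_measurable borel" using FI cn_borel by blast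
  have Gm: "?G \<in> borel_measurable (Pi\<^sub>M {..<Nt} (\<lambda>_. borel))"
  proof (intro borel_measurable_prod)
    fix r assume r: "r \<in> {..<Nt}"
    show "(\<lambda>x. F r (x r)) \<in> borel_measurable (Pi\<^sub>M {..<Nt} (\<lambda>_. borel))"
      using measurable_compose[OF measurable_component_singleton[of r "{..<Nt}" "\<lambda>_. borel"] Fm[of r]] r by simp
  qed
  have D: "distr M (Pi\<^sub>M {..<Nt} (\<lambda>_. borel)) ?V = Pi\<^sub>M {..<Nt} (\<lambda>_. cn_std)"
    using chan assms by blast
  have GV: "\<And>\<omega>. ?G (?V \<omega>) = (\<Prod>r<Nt. F r (h i j m r \<omega>))" by simp
  have "integrable (Pi\<^sub>M {..<Nt} (\<lambda>_. cn_std)) ?G"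
    by (rule CNP.product_integrable_prod) (auto intro: FI)
  then have "integrable (distr M (Pi\<^sub>M {..<Nt} (\<lambda>_. borel)) ?V) ?G" using D by simp
  then show "integrable M (\<lambda>\<omega>. \<Prod>r<Nt. F r (h i j m r \<omega>))"
    using integrable_distr_eq[OF Vm Gm] GV by simp
  have "(\<integral>\<omega>. (\<Prod>r<Nt. F r (h i j m r \<omega>)) \<partial>M) = integral\<^sup>L (distr M (Pi\<^sub>M {..<Nt} (\<lambda>_. borel)) ?V) ?G"
    using integral_distr[OF Vm Gm] GV by simp
  also have "\<dots> = integral\<^sup>L (Pi\<^sub>M {..<Nt} (\<lambda>_. cn_std)) ?G" using D by simp
  also have "\<dots> = (\<Prod>r<Nt. integral\<^sup>L cn_std (F r))"
    by (rule CNP.product_integral_prod) (auto intro: FI)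
  finally show "(\<integral>\<omega>. (\<Prod>r<Nt. F r (h i j m r \<omega>)) \<partial>M) = (\<Prod>r<Nt. integral\<^sup>L cn_std (F r))" .
qed


definition okb where "okb i j m \<longleftrightarrow> i \<in> {1..L} \<and> j \<in> {1..K} \<and> m \<in> {1..L}"

lemma HM1:
  fixes f :: "complex \<Rightarrow> complex"
  assumes "okb i j m" "r < Nt" "integrable cn_std f"
  shows "integrable M (\<lambda>\<omega>. f (h i j m r \<omega>))" "(\<integral>\<omega>. f (h i j m r \<omega>) \<partial>M) = integral\<^sup>L cn_std f"
proof -
  define F where "F = (\<lambda>t z. if t = r then f z else 1)"
  have FI: "integrable cn_std (F t)" if "t < Nt" for t unfolding F_def using assms(3) by (cases "t = r") auto
  have P: "\<And>\<omega>. (\<Prod>t<Nt. F t (h i j m t \<omega>)) = f (h i j m r \<omega>)"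
    unfolding F_def using assms(2) by simp
  have Q: "(\<Prod>t<Nt. integral\<^sup>L cn_std (F t)) = integral\<^sup>L cn_std f"
  proof -
    have "(\<Prod>t<Nt. integral\<^sup>L cn_std (F t)) = (\<Prod>t<Nt. if t = r then integral\<^sup>L cn_std f else 1)"
      by (intro prod.cong) (auto simp: F_def CN.prob_space)
    then show ?thesis using assms(2) by simp
  qed
  have I1: "integrable M (\<lambda>\<omega>. \<Prod>t<Nt. F t (h i j m t \<omega>))"
    by (rule HM(1)) (use assms(1) FI in \<open>auto simp: okb_def\<close>)
  have I2: "(\<integral>\<omega>. (\<Prod>t<Nt. F t (h i j m t \<omega>)) \<partial>M) = (\<Prod>t<Nt. integral\<^sup>L cn_std (F t))"
    by (rule HM(2)) (use assms(1) FI in \<open>auto simp: okb_def\<close>)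
  show "integrable M (\<lambda>\<omega>. f (h i j m r \<omega>))" using I1 P by simp
  show "(\<integral>\<omega>. f (h i j m r \<omega>) \<partial>M) = integral\<^sup>L cn_std f" using I2 P Q by simp
qed

lemma HM2:
  fixes f g :: "complex \<Rightarrow> complex"
  assumes "okb i j m" "r < Nt" "s < Nt" "r \<noteq> s" "integrable cn_std f" "integrable cn_std g"
  shows "integrable M (\<lambda>\<omega>. f (h i j m r \<omega>) * g (h i j m s \<omega>))"
    "(\<integral>\<omega>. f (h i j m r \<omega>) * g (h i j m s \<omega>) \<partial>M) = integral\<^sup>L cn_std f * integral\<^sup>L cn_std g"
proof -
  define F where "F = (\<lambda>t z. if t = r then f z else if t = s then g z else 1)"
  have FI: "integrable cn_std (F t)" if "t < Nt" for t unfolding F_def using assms(5,6) by (cases "t = r"; cases "t = s") auto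
  have P: "\<And>\<omega>. (\<Prod>t<Nt. F t (h i j m t \<omega>)) = f (h i j m r \<omega>) * g (h i j m s \<omega>)"
    unfolding F_def using assms(2,3,4) by (simp add: prod.delta_remove)
  have Q: "(\<Prod>t<Nt. integral\<^sup>L cn_std (F t)) = integral\<^sup>L cn_std f * integral\<^sup>L cn_std g"
  proof -
    have "(\<Prod>t<Nt. integral\<^sup>L cn_std (F t)) = (\<Prod>t<Nt. if t = r then integral\<^sup>L cn_std f else if t = s then integral\<^sup>L cn_std g else 1)"
      by (intro prod.cong) (auto simp: F_def CN.prob_space)
    then show ?thesis using assms(2,3,4) by (simp add: prod.delta_remove)
  qed
  have I1: "integrable M (\<lambda>\<omega>. \<Prod>t<Nt. F t (h i j m t \<omega>))"
    by (rule HM(1)) (use assms(1) FI in \<open>auto simp: okb_def\<close>)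
  have I2: "(\<integral>\<omega>. (\<Prod>t<Nt. F t (h i j m t \<omega>)) \<partial>M) = (\<Prod>t<Nt. integral\<^sup>L cn_std (F t))"
    by (rule HM(2)) (use assms(1) FI in \<open>auto simp: okb_def\<close>)
  show "integrable M (\<lambda>\<omega>. f (h i j m r \<omega>) * g (h i j m s \<omega>))" using I1 P by simp
  show "(\<integral>\<omega>. f (h i j m r \<omega>) * g (h i j m s \<omega>) \<partial>M) = integral\<^sup>L cn_std f * integral\<^sup>L cn_std g"
    using I2 P Q by simp
qed


lemma cnz_int: "integrable cn_std (\<lambda>z. cnj z)" "integral\<^sup>L cn_std (\<lambda>z. cnj z) = 0"
  using cn_z by (auto simp: integral_cnj)

lemma cn_one: "integrable cn_std (\<lambda>z. 1::complex)" "integral\<^sup>L cn_std (\<lambda>z. 1::complex) = 1"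
  by (auto simp: CN.prob_space)

lemma m1: assumes "okb i j m" "r < Nt"
  shows "integrable M (h i j m r)" "(\<integral>\<omega>. h i j m r \<omega> \<partial>M) = 0"
  using HM1[OF assms cn_z(1)] cn_z(2) by auto

lemma m2: assumes "okb i j m" "r < Nt"
  shows "integrable M (\<lambda>\<omega>. cnj (h i j m r \<omega>))" "(\<integral>\<omega>. cnj (h i j m r \<omega>) \<partial>M) = 0"
  using HM1[OF assms cnz_int(1)] cnz_int(2) by auto

lemma m3: assumes "okb i j m" "r < Nt" "s < Nt"
  shows "integrable M (\<lambda>\<omega>. cnj (h i j m r \<omega>) * h i j m s \<omega>)"
    "(\<integral>\<omega>. cnj (h i j m r \<omega>) * h i j m s \<omega> \<partial>M) = (if r = s then 1 else 0)"
proof -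
  have "integrable M (\<lambda>\<omega>. cnj (h i j m r \<omega>) * h i j m s \<omega>) \<and>
    (\<integral>\<omega>. cnj (h i j m r \<omega>) * h i j m s \<omega> \<partial>M) = (if r = s then 1 else 0)"
  proof (cases "r = s")
    case True then show ?thesis using HM1[OF assms(1,2) cn_zz(1)] cn_zz(2) by auto
  next
    case False then show ?thesis using HM2[OF assms False cnz_int(1) cn_z(1)] cn_z(2) by auto
  qed
  then show "integrable M (\<lambda>\<omega>. cnj (h i j m r \<omega>) * h i j m s \<omega>)"
    "(\<integral>\<omega>. cnj (h i j m r \<omega>) * h i j m s \<omega> \<partial>M) = (if r = s then 1 else 0)" by auto
qed

lemma m3': assumes "okb i j m" "r < Nt" "s < Nt"
  shows "integrable M (\<lambda>\<omega>. h i j m r \<omega> * cnj (h i j m s \<omega>))"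
    "(\<integral>\<omega>. h i j m r \<omega> * cnj (h i j m s \<omega>) \<partial>M) = (if r = s then 1 else 0)"
  using m3[OF assms(1,3,2)] by (auto simp: mult.commute eq_commute)

lemma m4: assumes "okb i j m" "r < Nt" "s < Nt"
  shows "integrable M (\<lambda>\<omega>. (cnj (h i j m r \<omega>) * h i j m r \<omega>) * (cnj (h i j m s \<omega>) * h i j m s \<omega>))"
    "(\<integral>\<omega>. (cnj (h i j m r \<omega>) * h i j m r \<omega>) * (cnj (h i j m s \<omega>) * h i j m s \<omega>) \<partial>M) = (if r = s then 2 else 1)"
proof -
  have "integrable M (\<lambda>\<omega>. (cnj (h i j m r \<omega>) * h i j m r \<omega>) * (cnj (h i j m s \<omega>) * h i j m s \<omega>)) \<and>
    (\<integral>\<omega>. (cnj (h i j m r \<omega>) * h i j m r \<omega>) * (cnj (h i j m s \<omega>) * h i j m s \<omega>) \<partial>M) = (if r = s then 2 else 1)"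
  proof (cases "r = s")
    case True then show ?thesis using HM1[OF assms(1,2) cn_zz2(1)] cn_zz2(2) by auto
  next
    case False then show ?thesis using HM2[OF assms False cn_zz(1) cn_zz(1)] cn_zz(2) by auto
  qed
  then show "integrable M (\<lambda>\<omega>. (cnj (h i j m r \<omega>) * h i j m r \<omega>) * (cnj (h i j m s \<omega>) * h i j m s \<omega>))"
    "(\<integral>\<omega>. (cnj (h i j m r \<omega>) * h i j m r \<omega>) * (cnj (h i j m s \<omega>) * h i j m s \<omega>) \<partial>M) = (if r = s then 2 else 1)" by auto
qed

lemma m5: assumes "okb i j m" "r < Nt" "s < Nt"
  shows "integrable M (\<lambda>\<omega>. (cnj (h i j m s \<omega>) * h i j m s \<omega>) * h i j m r \<omega>)"
proof (cases "r = s")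
  case True then show ?thesis using HM1[OF assms(1,2) cn_zz1(1)] by auto
next
  case False then show ?thesis using HM2[OF assms(1,3,2) _ cn_zz(1) cn_z(1)] by auto
qed

definition nsq where "nsq i j m \<omega> = (\<Sum>r<Nt. cnj (h i j m r \<omega>) * h i j m r \<omega>)"

lemma nsq_int: assumes "okb i j m" shows "integrable M (nsq i j m)" "integral\<^sup>L M (nsq i j m) = of_nat Nt"
  using m3[OF assms] unfolding nsq_def
  by (auto intro!: Bochner_Integration.integrable_sum simp: Bochner_Integration.integral_sum)

lemma nsq2: assumes "okb i j m"
  shows "integrable M (\<lambda>\<omega>. nsq i j m \<omega> * nsq i j m \<omega>)"
    "(\<integral>\<omega>. nsq i j m \<omega> * nsq i j m \<omega> \<partial>M) = of_nat Nt * of_nat Nt + of_nat Nt"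
proof -
  have e: "\<And>\<omega>. nsq i j m \<omega> * nsq i j m \<omega> = (\<Sum>r<Nt. \<Sum>s<Nt. (cnj (h i j m r \<omega>) * h i j m r \<omega>) * (cnj (h i j m s \<omega>) * h i j m s \<omega>))"
    by (simp add: nsq_def sum_product)
  show "integrable M (\<lambda>\<omega>. nsq i j m \<omega> * nsq i j m \<omega>)"
    unfolding e using m4[OF assms] by (auto intro!: Bochner_Integration.integrable_sum)
  have "(\<integral>\<omega>. nsq i j m \<omega> * nsq i j m \<omega> \<partial>M) = (\<Sum>r<Nt. \<Sum>s<Nt. (if r = s then 2 else 1::complex))"
    unfolding e by (subst int_sum2(1)) (use m4[OF assms] in auto)
  also have "\<dots> = (\<Sum>r<Nt. (of_nat Nt + 1 :: complex))"
  proof (rule sum.cong[OF refl])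
    fix r assume r: "r \<in> {..<Nt}"
    have "(\<Sum>s<Nt. (if r = s then 2 else 1::complex)) = (\<Sum>s<Nt. (1 + (if r = s then 1 else 0)::complex))"
      by (intro sum.cong) auto
    also have "\<dots> = of_nat Nt + 1" using r by (simp add: sum.distrib)
    finally show "(\<Sum>s<Nt. (if r = s then 2 else 1::complex)) = of_nat Nt + 1" .
  qed
  also have "\<dots> = of_nat Nt * of_nat Nt + of_nat Nt" by (simp add: algebra_simps)
  finally show "(\<integral>\<omega>. nsq i j m \<omega> * nsq i j m \<omega> \<partial>M) = of_nat Nt * of_nat Nt + of_nat Nt" .
qed

lemma nsq_h: assumes "okb i j m" "r < Nt"
  shows "integrable M (\<lambda>\<omega>. nsq i j m \<omega> * h i j m r \<omega>)"
  unfolding nsq_def sum_distrib_right using m5[OF assms] by (auto intro!: Bochner_Integration.integrable_sum)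


abbreviation "BS \<equiv> block_space Nt tau"
definition RR where "RR A \<omega> = restrict (\<lambda>b. block_rv Nt tau h nz b \<omega>) A"

definition dep :: "((nat \<times> nat \<times> nat) + nat) set \<Rightarrow> ('a \<Rightarrow> complex) \<Rightarrow> bool" where
  "dep A U \<longleftrightarrow> (\<exists>f \<in> borel_measurable (Pi\<^sub>M A BS). \<forall>\<omega>\<in>space M. U \<omega> = f (RR A \<omega>))"

lemma indep_fact:
  fixes U V :: "'a \<Rightarrow> complex"
  assumes A: "A1 \<subseteq> blocks L K" "A2 \<subseteq> blocks L K" "A1 \<inter> A2 = {}"
    and d: "dep A1 U" "dep A2 V" and i: "integrable M U" "integrable M V"
  shows "integrable M (\<lambda>\<omega>. U \<omega> * V \<omega>)" "(\<integral>\<omega>. U \<omega> * V \<omega> \<partial>M) = integral\<^sup>L M U * integral\<^sup>L M V"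
proof -
  obtain f where f: "f \<in> borel_measurable (Pi\<^sub>M A1 BS)" "\<forall>\<omega>\<in>space M. U \<omega> = f (RR A1 \<omega>)"
    using d(1) unfolding dep_def by blast
  obtain g where g: "g \<in> borel_measurable (Pi\<^sub>M A2 BS)" "\<forall>\<omega>\<in>space M. V \<omega> = g (RR A2 \<omega>)"
    using d(2) unfolding dep_def by blast
  have iv: "indep_var (Pi\<^sub>M A1 BS) (RR A1) (Pi\<^sub>M A2 BS) (RR A2)"
    unfolding RR_def by (rule indep_var_restrict[OF indep A(3) A(1) A(2)])
  have iv2: "indep_var borel (f \<circ> RR A1) borel (g \<circ> RR A2)"
    by (rule indep_var_compose[OF iv f(1) g(1)])
  have "integrable M U = integrable M (f \<circ> RR A1)" by (rule Bochner_Integration.integrable_cong) (use f(2) in auto)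
  then have iU: "integrable M (f \<circ> RR A1)" using i(1) by simp
  have "integrable M V = integrable M (g \<circ> RR A2)" by (rule Bochner_Integration.integrable_cong) (use g(2) in auto)
  then have iV: "integrable M (g \<circ> RR A2)" using i(2) by simp
  have "integrable M (\<lambda>\<omega>. (f \<circ> RR A1) \<omega> * (g \<circ> RR A2) \<omega>)"
    by (rule indep_var_integrable[OF iv2 iU iV])
  moreover have "integrable M (\<lambda>\<omega>. U \<omega> * V \<omega>) = integrable M (\<lambda>\<omega>. (f \<circ> RR A1) \<omega> * (g \<circ> RR A2) \<omega>)"
    by (rule Bochner_Integration.integrable_cong) (use f(2) g(2) in auto)
  ultimately show "integrable M (\<lambda>\<omega>. U \<omega> * V \<omega>)" by simp
  have "(\<integral>\<omega>. (f \<circ> RR A1) \<omega> * (g \<circ> RR A2) \<omega> \<partial>M) = integral\<^sup>L M (f \<circ> RR A1) * integral\<^sup>L M (g \<circ> RR A2)"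
    by (rule indep_var_lebesgue_integral[OF iv2 iU iV])
  moreover have "(\<integral>\<omega>. U \<omega> * V \<omega> \<partial>M) = (\<integral>\<omega>. (f \<circ> RR A1) \<omega> * (g \<circ> RR A2) \<omega> \<partial>M)"
    using f(2) g(2) by (intro Bochner_Integration.integral_cong) auto
  moreover have "integral\<^sup>L M U = integral\<^sup>L M (f \<circ> RR A1)" using f(2) by (intro Bochner_Integration.integral_cong) auto
  moreover have "integral\<^sup>L M V = integral\<^sup>L M (g \<circ> RR A2)" using g(2) by (intro Bochner_Integration.integral_cong) auto
  ultimately show "(\<integral>\<omega>. U \<omega> * V \<omega> \<partial>M) = integral\<^sup>L M U * integral\<^sup>L M V" by simp
qed

lemma dep_h: assumes "Inl (i,j,m) \<in> A" "r < Nt" shows "dep A (h i j m r)"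
  unfolding dep_def
proof (intro bexI ballI)
  show "(\<lambda>x. x (Inl (i,j,m)) r) \<in> borel_measurable (Pi\<^sub>M A BS)"
  proof -
    have a: "(\<lambda>x. x (Inl (i,j,m))) \<in> measurable (Pi\<^sub>M A BS) (Pi\<^sub>M {..<Nt} (\<lambda>_. borel))"
      using measurable_component_singleton[OF assms(1), of BS] by (simp add: block_space_def)
    have b: "(\<lambda>y. y r) \<in> measurable (Pi\<^sub>M {..<Nt} (\<lambda>_::nat. borel)) (borel :: complex measure)"
      using measurable_component_singleton[of r "{..<Nt}" "\<lambda>_. borel"] assms(2) by simp
    show ?thesis using measurable_compose[OF a b] by simp
  qed
  fix \<omega> show "h i j m r \<omega> = RR A \<omega> (Inl (i, j, m)) r"
    using assms by (simp add: RR_def block_rv_def)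
qed

lemma dep_n: assumes "Inr m \<in> A" "a < tau * Nt" shows "dep A (nz m a)"
  unfolding dep_def
proof (intro bexI ballI)
  show "(\<lambda>x. x (Inr m) a) \<in> borel_measurable (Pi\<^sub>M A BS)"
  proof -
    have a: "(\<lambda>x. x (Inr m)) \<in> measurable (Pi\<^sub>M A BS) (Pi\<^sub>M {..<tau * Nt} (\<lambda>_. borel))"
      using measurable_component_singleton[OF assms(1), of BS] by (simp add: block_space_def)
    have b: "(\<lambda>y. y a) \<in> measurable (Pi\<^sub>M {..<tau * Nt} (\<lambda>_::nat. borel)) (borel :: complex measure)"
      using measurable_component_singleton[of a "{..<tau * Nt}" "\<lambda>_. borel"] assms(2) by simp
    show ?thesis using measurable_compose[OF a b] by simp
  qed
  fix \<omega> show "nz m a \<omega> = RR A \<omega> (Inr m) a"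
    using assms by (simp add: RR_def block_rv_def)
qed

lemma dep_const: "dep A (\<lambda>_. c)"
  unfolding dep_def by (intro bexI[of _ "\<lambda>_. c"]) auto

lemma dep_mult: "dep A U \<Longrightarrow> dep A V \<Longrightarrow> dep A (\<lambda>\<omega>. U \<omega> * V \<omega>)"
  unfolding dep_def
proof (elim bexE)
  fix f g assume "f \<in> borel_measurable (Pi\<^sub>M A BS)" "\<forall>\<omega>\<in>space M. U \<omega> = f (RR A \<omega>)"
    "g \<in> borel_measurable (Pi\<^sub>M A BS)" "\<forall>\<omega>\<in>space M. V \<omega> = g (RR A \<omega>)"
  then show "\<exists>f\<in>borel_measurable (Pi\<^sub>M A BS). \<forall>\<omega>\<in>space M. U \<omega> * V \<omega> = f (RR A \<omega>)"
    by (intro bexI[of _ "\<lambda>x. f x * g x"]) (auto intro: borel_measurable_times)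
qed

lemma dep_add: "dep A U \<Longrightarrow> dep A V \<Longrightarrow> dep A (\<lambda>\<omega>. U \<omega> + V \<omega>)"
  unfolding dep_def
proof (elim bexE)
  fix f g assume "f \<in> borel_measurable (Pi\<^sub>M A BS)" "\<forall>\<omega>\<in>space M. U \<omega> = f (RR A \<omega>)"
    "g \<in> borel_measurable (Pi\<^sub>M A BS)" "\<forall>\<omega>\<in>space M. V \<omega> = g (RR A \<omega>)"
  then show "\<exists>f\<in>borel_measurable (Pi\<^sub>M A BS). \<forall>\<omega>\<in>space M. U \<omega> + V \<omega> = f (RR A \<omega>)"
    by (intro bexI[of _ "\<lambda>x. f x + g x"]) (auto intro: borel_measurable_add)
qed

lemma dep_cnj: "dep A U \<Longrightarrow> dep A (\<lambda>\<omega>. cnj (U \<omega>))"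
  unfolding dep_def
proof (elim bexE)
  fix f assume "f \<in> borel_measurable (Pi\<^sub>M A BS)" "\<forall>\<omega>\<in>space M. U \<omega> = f (RR A \<omega>)"
  then show "\<exists>f\<in>borel_measurable (Pi\<^sub>M A BS). \<forall>\<omega>\<in>space M. cnj (U \<omega>) = f (RR A \<omega>)"
    by (intro bexI[of _ "\<lambda>x. cnj (f x)"]) auto
qed

lemma dep_sum: "finite S \<Longrightarrow> (\<And>i. i \<in> S \<Longrightarrow> dep A (U i)) \<Longrightarrow> dep A (\<lambda>\<omega>. \<Sum>i\<in>S. U i \<omega>)"
proof (induction S rule: finite_induct)
  case empty then show ?case using dep_const[of A 0] by simp
next
  case (insert x F) then show ?case by (simp add: dep_add)
qed


lemma okb_users: "(i,j) \<in> users L K \<Longrightarrow> m \<in> {1..L} \<Longrightarrow> okb i j m"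
  by (auto simp: okb_def users_def)

lemma Inl_blocks: "(i,j) \<in> users L K \<Longrightarrow> m \<in> {1..L} \<Longrightarrow> Inl (i,j,m) \<in> blocks L K"
  by (auto simp: blocks_def users_def)

lemma Inr_blocks: "m \<in> {1..L} \<Longrightarrow> Inr m \<in> blocks L K"
  by (auto simp: blocks_def)

lemma E_pair:
  assumes b: "b \<in> users L K" "b' \<in> users L K" and m: "m \<in> {1..L}" and rs: "r < Nt" "s < Nt"
  shows "integrable M (\<lambda>\<omega>. h (fst b) (snd b) m r \<omega> * cnj (h (fst b') (snd b') m s \<omega>))"
    "(\<integral>\<omega>. h (fst b) (snd b) m r \<omega> * cnj (h (fst b') (snd b') m s \<omega>) \<partial>M) = (if b = b' \<and> r = s then 1 else 0)"
proof -
  obtain i j where bij: "b = (i,j)" by (cases b)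
  obtain i' j' where bij': "b' = (i',j')" by (cases b')
  have o: "okb i j m" "okb i' j' m" using b m bij bij' okb_users by auto
  have "integrable M (\<lambda>\<omega>. h i j m r \<omega> * cnj (h i' j' m s \<omega>)) \<and>
        (\<integral>\<omega>. h i j m r \<omega> * cnj (h i' j' m s \<omega>) \<partial>M) = (if (i,j) = (i',j') \<and> r = s then 1 else 0)"
  proof (cases "(i,j) = (i',j')")
    case True then show ?thesis using m3'[OF o(1) rs] by auto
  next
    case False
    have A: "{Inl (i,j,m)} \<subseteq> blocks L K" "{Inl (i',j',m)} \<subseteq> blocks L K" "{Inl (i,j,m)} \<inter> {Inl (i',j',m)} = {}"
      using b m bij bij' False by (auto simp: Inl_blocks)
    have d: "dep {Inl (i,j,m)} (h i j m r)" "dep {Inl (i',j',m)} (\<lambda>\<omega>. cnj (h i' j' m s \<omega>))"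
      using rs by (auto intro!: dep_h dep_cnj)
    show ?thesis using indep_fact[OF A d m1(1)[OF o(1) rs(1)] m2(1)[OF o(2) rs(2)]] m1(2)[OF o(1) rs(1)] False
      by auto
  qed
  then show "integrable M (\<lambda>\<omega>. h (fst b) (snd b) m r \<omega> * cnj (h (fst b') (snd b') m s \<omega>))"
    "(\<integral>\<omega>. h (fst b) (snd b) m r \<omega> * cnj (h (fst b') (snd b') m s \<omega>) \<partial>M) = (if b = b' \<and> r = s then 1 else 0)"
    using bij bij' by auto
qed

definition Nz where "Nz q m n r \<omega> = (\<Sum>t<tau. complex_of_real (q m n t) * nz m (t * Nt + r) \<omega>)"

lemma idx_eq: "r < Nt \<Longrightarrow> s < Nt \<Longrightarrow> (t * Nt + r = t' * Nt + s) \<longleftrightarrow> (t = t' \<and> r = s)"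
proof
  assume "r < Nt" "s < Nt" "t * Nt + r = t' * Nt + s"
  then have "(t * Nt + r) div Nt = (t' * Nt + s) div Nt" "(t * Nt + r) mod Nt = (t' * Nt + s) mod Nt" by simp_all
  then show "t = t' \<and> r = s" using \<open>r < Nt\<close> \<open>s < Nt\<close> by simp
qed auto

lemma idx_lt: "t < tau \<Longrightarrow> r < Nt \<Longrightarrow> t * Nt + r < tau * Nt"
proof -
  assume "t < tau" "r < Nt"
  then have "t * Nt + r < t * Nt + Nt" by simp
  also have "\<dots> = Suc t * Nt" by simp
  also have "\<dots> \<le> tau * Nt" using \<open>t < tau\<close> by (intro mult_right_mono) auto
  finally show ?thesis .
qed

lemma Nz_mom:
  assumes m: "m \<in> {1..L}" and r: "r < Nt"
  shows "integrable M (Nz q m n r)" "integral\<^sup>L M (Nz q m n r) = 0"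
    "dep {Inr m} (Nz q m n r)"
proof -
  have nm: "\<And>t. t < tau \<Longrightarrow> integrable M (nz m (t * Nt + r)) \<and> integral\<^sup>L M (nz m (t * Nt + r)) = 0"
    using noise_mean m idx_lt r by blast
  show "integrable M (Nz q m n r)" unfolding Nz_def using nm by (auto intro!: Bochner_Integration.integrable_sum)
  show "integral\<^sup>L M (Nz q m n r) = 0" unfolding Nz_def using nm by (simp add: Bochner_Integration.integral_sum)
  show "dep {Inr m} (Nz q m n r)" unfolding Nz_def
    using idx_lt r by (auto intro!: dep_sum dep_mult dep_const dep_n)
qed

lemma Nz_cov:
  assumes m: "m \<in> {1..L}" and r: "r < Nt" and s: "s < Nt" and qn: "(\<Sum>t<tau. (q m n t)\<^sup>2) = 1"
  shows "integrable M (\<lambda>\<omega>. Nz q m n r \<omega> * cnj (Nz q m n s \<omega>))"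
    "(\<integral>\<omega>. Nz q m n r \<omega> * cnj (Nz q m n s \<omega>) \<partial>M) = (if r = s then complex_of_real ((sn m)\<^sup>2) else 0)"
proof -
  define F where "F = (\<lambda>t t' \<omega>. complex_of_real (q m n t * q m n t') * (nz m (t * Nt + r) \<omega> * cnj (nz m (t' * Nt + s) \<omega>)))"
  have e: "\<And>\<omega>. Nz q m n r \<omega> * cnj (Nz q m n s \<omega>) = (\<Sum>t<tau. \<Sum>t'<tau. F t t' \<omega>)"
    unfolding Nz_def F_def by (simp add: sum_product cnj_sum algebra_simps)
  have nc: "\<And>t t'. t < tau \<Longrightarrow> t' < tau \<Longrightarrow> integrable M (\<lambda>\<omega>. nz m (t * Nt + r) \<omega> * cnj (nz m (t' * Nt + s) \<omega>)) \<and>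
     (\<integral>\<omega>. nz m (t * Nt + r) \<omega> * cnj (nz m (t' * Nt + s) \<omega>) \<partial>M) = (if t * Nt + r = t' * Nt + s then complex_of_real ((sn m)\<^sup>2) else 0)"
    using noise_cov m idx_lt r s by blast
  have Fi: "\<And>t t'. t \<in> {..<tau} \<Longrightarrow> t' \<in> {..<tau} \<Longrightarrow> integrable M (F t t')"
    unfolding F_def using nc by auto
  show "integrable M (\<lambda>\<omega>. Nz q m n r \<omega> * cnj (Nz q m n s \<omega>))"
    unfolding e using int_sum2(2)[of "{..<tau}" "{..<tau}" M F] Fi by simp
  have "(\<integral>\<omega>. Nz q m n r \<omega> * cnj (Nz q m n s \<omega>) \<partial>M) = (\<Sum>t<tau. \<Sum>t'<tau. integral\<^sup>L M (F t t'))"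
    unfolding e using int_sum2(1)[of "{..<tau}" "{..<tau}" M F] Fi by simp
  also have "\<dots> = (\<Sum>t<tau. \<Sum>t'<tau. if t' = t then (if r = s then complex_of_real ((q m n t)\<^sup>2 * (sn m)\<^sup>2) else 0) else 0)"
  proof (intro sum.cong refl)
    fix t t' assume "t \<in> {..<tau}" "t' \<in> {..<tau}"
    then show "integral\<^sup>L M (F t t') = (if t' = t then (if r = s then complex_of_real ((q m n t)\<^sup>2 * (sn m)\<^sup>2) else 0) else 0)"
      unfolding F_def using nc[of t t'] idx_eq[OF r s, of t t'] by (auto simp: power2_eq_square)
  qed
  also have "\<dots> = (if r = s then complex_of_real ((\<Sum>t<tau. (q m n t)\<^sup>2) * (sn m)\<^sup>2) else 0)"
    by (simp add: sum_distrib_right)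
  also have "\<dots> = (if r = s then complex_of_real ((sn m)\<^sup>2) else 0)" using qn by simp
  finally show "(\<integral>\<omega>. Nz q m n r \<omega> * cnj (Nz q m n s \<omega>) \<partial>M) = (if r = s then complex_of_real ((sn m)\<^sup>2) else 0)" .
qed


definition coef where "coef q eta m n b = (if b = (m,n) then 1 else eta (fst b) (snd b) m * rho tau q (fst b) (snd b) m n)"

definition Sv where "Sv q eta l k m n r \<omega> =
  (\<Sum>b\<in>users L K - {(l,k)}. complex_of_real (coef q eta m n b) * h (fst b) (snd b) m r \<omega>)"

definition Wv where "Wv q eta l k m n r \<omega> = Sv q eta l k m n r \<omega> + Nz q m n r \<omega>"

definition AS where "AS m = (\<lambda>b. Inl (fst b, snd b, m)) ` users L K"

lemma fin_users: "finite (users L K)" by (simp add: users_def)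

lemma Sv_dep: assumes "\<And>b. b \<in> users L K - {(l,k)} \<Longrightarrow> Inl (fst b, snd b, m) \<in> A" "r < Nt"
  shows "dep A (Sv q eta l k m n r)"
  unfolding Sv_def using assms fin_users by (auto intro!: dep_sum dep_mult dep_const dep_h)

lemma Sv_mom:
  assumes m: "m \<in> {1..L}" and r: "r < Nt"
  shows "integrable M (Sv q eta l k m n r)" "integral\<^sup>L M (Sv q eta l k m n r) = 0"
proof -
  have hm: "\<And>b. b \<in> users L K - {(l,k)} \<Longrightarrow> integrable M (h (fst b) (snd b) m r) \<and> integral\<^sup>L M (h (fst b) (snd b) m r) = 0"
    using m1[OF _ r] okb_users m by (metis DiffD1 prod.collapse)
  show "integrable M (Sv q eta l k m n r)" unfolding Sv_def using hm by (auto intro!: Bochner_Integration.integrable_sum)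
  show "integral\<^sup>L M (Sv q eta l k m n r) = 0" unfolding Sv_def using hm by (simp add: Bochner_Integration.integral_sum)
qed

lemma Sv_cov:
  assumes m: "m \<in> {1..L}" and r: "r < Nt" and s: "s < Nt"
  shows "integrable M (\<lambda>\<omega>. Sv q eta l k m n r \<omega> * cnj (Sv q eta l k m n s \<omega>))"
    "(\<integral>\<omega>. Sv q eta l k m n r \<omega> * cnj (Sv q eta l k m n s \<omega>) \<partial>M) =
       (if r = s then complex_of_real (\<Sum>b\<in>users L K - {(l,k)}. (coef q eta m n b)\<^sup>2) else 0)"
proof -
  let ?U = "users L K - {(l,k)}"
  define F where "F = (\<lambda>b b' \<omega>. complex_of_real (coef q eta m n b * coef q eta m n b') *
      (h (fst b) (snd b) m r \<omega> * cnj (h (fst b') (snd b') m s \<omega>)))"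
  have e: "\<And>\<omega>. Sv q eta l k m n r \<omega> * cnj (Sv q eta l k m n s \<omega>) = (\<Sum>b\<in>?U. \<Sum>b'\<in>?U. F b b' \<omega>)"
    unfolding Sv_def F_def by (simp add: sum_product cnj_sum algebra_simps)
  have ep: "\<And>b b'. b \<in> ?U \<Longrightarrow> b' \<in> ?U \<Longrightarrow> integrable M (\<lambda>\<omega>. h (fst b) (snd b) m r \<omega> * cnj (h (fst b') (snd b') m s \<omega>)) \<and>
    (\<integral>\<omega>. h (fst b) (snd b) m r \<omega> * cnj (h (fst b') (snd b') m s \<omega>) \<partial>M) = (if b = b' \<and> r = s then 1 else 0)"
    using E_pair m r s by auto
  have Fi: "\<And>b b'. b \<in> ?U \<Longrightarrow> b' \<in> ?U \<Longrightarrow> integrable M (F b b')"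
    unfolding F_def using ep by auto
  show "integrable M (\<lambda>\<omega>. Sv q eta l k m n r \<omega> * cnj (Sv q eta l k m n s \<omega>))"
    unfolding e using int_sum2(2)[of ?U ?U M F] Fi by simp
  have "(\<integral>\<omega>. Sv q eta l k m n r \<omega> * cnj (Sv q eta l k m n s \<omega>) \<partial>M) = (\<Sum>b\<in>?U. \<Sum>b'\<in>?U. integral\<^sup>L M (F b b'))"
    unfolding e using int_sum2(1)[of ?U ?U M F] Fi by simp
  also have "\<dots> = (\<Sum>b\<in>?U. \<Sum>b'\<in>?U. if b' = b then (if r = s then complex_of_real ((coef q eta m n b)\<^sup>2) else 0) else 0)"
  proof (intro sum.cong refl)
    fix b b' assume "b \<in> ?U" "b' \<in> ?U"
    then show "integral\<^sup>L M (F b b') = (if b' = b then (if r = s then complex_of_real ((coef q eta m n b)\<^sup>2) else 0) else 0)"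
      unfolding F_def using ep[of b b'] by (auto simp: power2_eq_square)
  qed
  also have "\<dots> = (if r = s then complex_of_real (\<Sum>b\<in>users L K - {(l,k)}. (coef q eta m n b)\<^sup>2) else 0)"
    using fin_users by simp
  finally show "(\<integral>\<omega>. Sv q eta l k m n r \<omega> * cnj (Sv q eta l k m n s \<omega>) \<partial>M) =
       (if r = s then complex_of_real (\<Sum>b\<in>users L K - {(l,k)}. (coef q eta m n b)\<^sup>2) else 0)" .
qed

lemma AS_props: "m \<in> {1..L} \<Longrightarrow> AS m \<subseteq> blocks L K" "AS m \<inter> {Inr m} = {}"
  "b \<in> users L K \<Longrightarrow> Inl (fst b, snd b, m) \<in> AS m"
  by (auto simp: AS_def blocks_def users_def)

lemma Wv_mom:
  assumes m: "m \<in> {1..L}" and r: "r < Nt"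
  shows "integrable M (Wv q eta l k m n r)" "integral\<^sup>L M (Wv q eta l k m n r) = 0"
  using Sv_mom[OF m r, of q eta l k n] Nz_mom[OF m r, of q n]
  by (auto simp: Wv_def[abs_def])

lemma Wv_cov:
  assumes m: "m \<in> {1..L}" and r: "r < Nt" and s: "s < Nt" and qn: "(\<Sum>t<tau. (q m n t)\<^sup>2) = 1"
  shows "integrable M (\<lambda>\<omega>. Wv q eta l k m n r \<omega> * cnj (Wv q eta l k m n s \<omega>))"
    "(\<integral>\<omega>. Wv q eta l k m n r \<omega> * cnj (Wv q eta l k m n s \<omega>) \<partial>M) =
       (if r = s then complex_of_real ((\<Sum>b\<in>users L K - {(l,k)}. (coef q eta m n b)\<^sup>2) + (sn m)\<^sup>2) else 0)"
proof -
  let ?S = "Sv q eta l k m n" and ?N = "Nz q m n"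
  have A: "AS m \<subseteq> blocks L K" "{Inr m} \<subseteq> blocks L K" "AS m \<inter> {Inr m} = {}"
    using AS_props m Inr_blocks by auto
  have A': "{Inr m} \<subseteq> blocks L K" "AS m \<subseteq> blocks L K" "{Inr m} \<inter> AS m = {}"
    using A by auto
  have dS: "\<And>r. r < Nt \<Longrightarrow> dep (AS m) (?S r)" by (rule Sv_dep) (auto intro: AS_props)
  have c1: "integrable M (\<lambda>\<omega>. ?S r \<omega> * cnj (?N s \<omega>)) \<and> (\<integral>\<omega>. ?S r \<omega> * cnj (?N s \<omega>) \<partial>M) = 0"
    using indep_fact[OF A dS[OF r] dep_cnj[OF Nz_mom(3)[OF m s, of q n]] Sv_mom(1)[OF m r] integrable_cnj[OF Nz_mom(1)[OF m s, of q n]]]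
      Sv_mom(2)[OF m r] by auto
  have c2: "integrable M (\<lambda>\<omega>. ?N r \<omega> * cnj (?S s \<omega>)) \<and> (\<integral>\<omega>. ?N r \<omega> * cnj (?S s \<omega>) \<partial>M) = 0"
    using indep_fact[OF A' Nz_mom(3)[OF m r, of q n] dep_cnj[OF dS[OF s]] Nz_mom(1)[OF m r, of q n] integrable_cnj[OF Sv_mom(1)[OF m s]]]
      Nz_mom(2)[OF m r, of q n] by auto
  have e: "\<And>\<omega>. Wv q eta l k m n r \<omega> * cnj (Wv q eta l k m n s \<omega>) =
     ?S r \<omega> * cnj (?S s \<omega>) + ?S r \<omega> * cnj (?N s \<omega>) + ?N r \<omega> * cnj (?S s \<omega>) + ?N r \<omega> * cnj (?N s \<omega>)"
    unfolding Wv_def by (simp add: algebra_simps)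
  show "integrable M (\<lambda>\<omega>. Wv q eta l k m n r \<omega> * cnj (Wv q eta l k m n s \<omega>))"
    unfolding e using c1 c2 Sv_cov(1)[OF m r s] Nz_cov(1)[of m r s q n, OF m r s qn] by auto
  show "(\<integral>\<omega>. Wv q eta l k m n r \<omega> * cnj (Wv q eta l k m n s \<omega>) \<partial>M) =
       (if r = s then complex_of_real ((\<Sum>b\<in>users L K - {(l,k)}. (coef q eta m n b)\<^sup>2) + (sn m)\<^sup>2) else 0)"
    unfolding e using c1 c2 Sv_cov[OF m r s] Nz_cov[of m r s q n, OF m r s qn] by simp
qed


lemma dep_mono: assumes "A \<subseteq> B" "dep A U" shows "dep B U"
proof -
  obtain f where f: "f \<in> borel_measurable (Pi\<^sub>M A BS)" "\<forall>\<omega>\<in>space M. U \<omega> = f (RR A \<omega>)"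
    using assms(2) unfolding dep_def by blast
  have "(\<lambda>x. f (restrict x A)) \<in> borel_measurable (Pi\<^sub>M B BS)"
    using measurable_compose[OF measurable_restrict_subset[OF assms(1)] f(1)] .
  moreover have "\<forall>\<omega>\<in>space M. U \<omega> = f (restrict (RR B \<omega>) A)"
    using f(2) assms(1) by (auto simp: RR_def restrict_restrict Int_absorb1)
  ultimately show ?thesis unfolding dep_def by (intro bexI[of _ "\<lambda>x. f (restrict x A)"]) auto
qed

lemma ghat_decomp:
  assumes lk: "(l,k) \<in> users L K" and mn: "(m,n) \<in> users L K"
  shows "ghat L K Nt tau h nz q eta m n r \<omega> = complex_of_real (coef q eta m n (l,k)) * h l k m r \<omega> + Wv q eta l k m n r \<omega>"
proof -
  let ?U = "users L K"
  let ?f = "\<lambda>b. complex_of_real (coef q eta m n b) * h (fst b) (snd b) m r \<omega>"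
  have "(\<Sum>(i, j)\<in>?U - {(m, n)}. complex_of_real (eta i j m * rho tau q i j m n) * h i j m r \<omega>)
     = (\<Sum>b\<in>?U - {(m, n)}. ?f b)"
    by (intro sum.cong refl) (auto simp: coef_def)
  then have "ghat L K Nt tau h nz q eta m n r \<omega> = (?f (m,n) + (\<Sum>b\<in>?U - {(m, n)}. ?f b)) + Nz q m n r \<omega>"
    unfolding ghat_def Nz_def by (simp add: coef_def)
  also have "?f (m,n) + (\<Sum>b\<in>?U - {(m, n)}. ?f b) = (\<Sum>b\<in>?U. ?f b)"
    using sum.remove[OF fin_users mn, of ?f] by simp
  also have "\<dots> = ?f (l,k) + (\<Sum>b\<in>?U - {(l, k)}. ?f b)"
    using sum.remove[OF fin_users lk, of ?f] by simp
  finally show ?thesis unfolding Wv_def Sv_def by (simp add: algebra_simps)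
qed

lemma nsq_dep: "r < Nt \<Longrightarrow> dep {Inl (l,k,m)} (nsq l k m)"
  unfolding nsq_def[abs_def] by (auto intro!: dep_sum dep_mult dep_cnj dep_h)

lemma nsq_cnj: "cnj (nsq l k m \<omega>) = nsq l k m \<omega>"
  unfolding nsq_def by (simp add: cnj_sum mult.commute)

lemma T_stats:
  fixes q eta :: "nat \<Rightarrow> nat \<Rightarrow> nat \<Rightarrow> real"
  assumes lk: "(l,k) \<in> users L K" and mn: "(m,n) \<in> users L K" and qn: "(\<Sum>t<tau. (q m n t)\<^sup>2) = 1"
  defines "T \<equiv> \<lambda>\<omega>. \<Sum>r<Nt. cnj (h l k m r \<omega>) * ghat L K Nt tau h nz q eta m n r \<omega>"
  defines "c \<equiv> coef q eta m n (l,k)"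
  defines "D \<equiv> (\<Sum>b\<in>users L K - {(l,k)}. (coef q eta m n b)\<^sup>2) + (sn m)\<^sup>2"
  shows "integrable M T" "integral\<^sup>L M T = complex_of_real (c * real Nt)"
    "integrable M (\<lambda>\<omega>. T \<omega> * cnj (T \<omega>))"
    "(\<integral>\<omega>. T \<omega> * cnj (T \<omega>) \<partial>M) = complex_of_real (c\<^sup>2 * (real Nt * real Nt + real Nt) + real Nt * D)"
proof -
  have m: "m \<in> {1..L}" using mn by (auto simp: users_def)
  have o: "okb l k m" using lk m okb_users by auto
  let ?W = "Wv q eta l k m n"
  define Y where "Y = (\<lambda>\<omega>. \<Sum>r<Nt. cnj (h l k m r \<omega>) * ?W r \<omega>)"
  have Te: "\<And>\<omega>. T \<omega> = complex_of_real c * nsq l k m \<omega> + Y \<omega>"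
    unfolding T_def Y_def nsq_def c_def using ghat_decomp[OF lk mn]
    by (simp add: sum_distrib_left sum.distrib algebra_simps)
  have A: "{Inl (l,k,m)} \<subseteq> blocks L K" "blocks L K - {Inl (l,k,m)} \<subseteq> blocks L K"
     "{Inl (l,k,m)} \<inter> (blocks L K - {Inl (l,k,m)}) = {}"
    using Inl_blocks[OF lk m] by auto
  have dW: "dep (blocks L K - {Inl (l,k,m)}) (?W r)" if r: "r < Nt" for r
    unfolding Wv_def[abs_def]
  proof (rule dep_add)
    show "dep (blocks L K - {Inl (l, k, m)}) (Sv q eta l k m n r)"
      by (rule Sv_dep[OF _ r]) (use Inl_blocks m in auto)
    show "dep (blocks L K - {Inl (l, k, m)}) (Nz q m n r)"
      by (rule dep_mono[OF _ Nz_mom(3)[OF m r]]) (use Inr_blocks[OF m] in auto)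
  qed
  have dh: "dep {Inl (l,k,m)} (h l k m r)" if "r < Nt" for r using that by (auto intro: dep_h)
  note Wm = Wv_mom[OF m, of _ q eta l k n]
  have Wc: "integrable M (\<lambda>\<omega>. ?W r \<omega> * cnj (?W s \<omega>))"
     "(\<integral>\<omega>. ?W r \<omega> * cnj (?W s \<omega>) \<partial>M) = (if r = s then complex_of_real D else 0)"
    if "r < Nt" "s < Nt" for r s
    using Wv_cov[of m r s q n eta l k, OF m that qn] by (simp_all add: D_def)
  have Y1: "integrable M (\<lambda>\<omega>. cnj (h l k m r \<omega>) * ?W r \<omega>) \<and> (\<integral>\<omega>. cnj (h l k m r \<omega>) * ?W r \<omega> \<partial>M) = 0"
    if r: "r < Nt" for r
    using indep_fact[OF A dep_cnj[OF dh[OF r]] dW[OF r] m2(1)[OF o r] Wm(1)[OF r]] Wm(2)[OF r] by simp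
  have iY: "integrable M Y" unfolding Y_def using Y1 by (auto intro!: Bochner_Integration.integrable_sum)
  have EY: "integral\<^sup>L M Y = 0" unfolding Y_def using Y1 by (simp add: Bochner_Integration.integral_sum)
  show "integrable M T" unfolding Te using iY nsq_int(1)[OF o] by auto
  show "integral\<^sup>L M T = complex_of_real (c * real Nt)" unfolding Te using iY nsq_int[OF o] EY by simp
  have YY1: "integrable M (\<lambda>\<omega>. (cnj (h l k m r \<omega>) * h l k m s \<omega>) * (?W r \<omega> * cnj (?W s \<omega>))) \<and>
     (\<integral>\<omega>. (cnj (h l k m r \<omega>) * h l k m s \<omega>) * (?W r \<omega> * cnj (?W s \<omega>)) \<partial>M) = (if r = s then complex_of_real D else 0)"
    if r: "r < Nt" and s: "s < Nt" for r s
    using indep_fact[OF A dep_mult[OF dep_cnj[OF dh[OF r]] dh[OF s]] dep_mult[OF dW[OF r] dep_cnj[OF dW[OF s]]]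
      m3(1)[OF o r s] Wc(1)[OF r s]] m3(2)[OF o r s] Wc(2)[OF r s] by simp
  have eYY: "\<And>\<omega>. Y \<omega> * cnj (Y \<omega>) = (\<Sum>r<Nt. \<Sum>s<Nt. (cnj (h l k m r \<omega>) * h l k m s \<omega>) * (?W r \<omega> * cnj (?W s \<omega>)))"
    unfolding Y_def cnj_sum sum_product by (intro sum.cong refl) (simp add: algebra_simps)
  have iYY: "integrable M (\<lambda>\<omega>. Y \<omega> * cnj (Y \<omega>))"
    unfolding eYY using YY1 by (intro int_sum2(2)) auto
  have "(\<integral>\<omega>. Y \<omega> * cnj (Y \<omega>) \<partial>M) = (\<Sum>r<Nt. \<Sum>s<Nt. (if r = s then complex_of_real D else 0))"
    unfolding eYY using YY1 by (subst int_sum2(1)) auto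
  also have "\<dots> = complex_of_real (real Nt * D)" by simp
  finally have EYY: "(\<integral>\<omega>. Y \<omega> * cnj (Y \<omega>) \<partial>M) = complex_of_real (real Nt * D)" .
  have dn: "dep {Inl (l,k,m)} (nsq l k m)"
    unfolding nsq_def[abs_def] by (auto intro!: dep_sum dep_mult dep_cnj dep_h)
  have X1: "integrable M (\<lambda>\<omega>. (nsq l k m \<omega> * h l k m r \<omega>) * cnj (?W r \<omega>)) \<and>
     (\<integral>\<omega>. (nsq l k m \<omega> * h l k m r \<omega>) * cnj (?W r \<omega>) \<partial>M) = 0" if r: "r < Nt" for r
    using indep_fact[OF A dep_mult[OF dn dh[OF r]] dep_cnj[OF dW[OF r]] nsq_h[OF o r] integrable_cnj[OF Wm(1)[OF r]]]
      Wm(2)[OF r] by simp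
  have X2: "integrable M (\<lambda>\<omega>. (nsq l k m \<omega> * cnj (h l k m r \<omega>)) * ?W r \<omega>) \<and>
     (\<integral>\<omega>. (nsq l k m \<omega> * cnj (h l k m r \<omega>)) * ?W r \<omega> \<partial>M) = 0" if r: "r < Nt" for r
  proof -
    have i: "integrable M (\<lambda>\<omega>. nsq l k m \<omega> * cnj (h l k m r \<omega>))"
      using integrable_cnj[OF nsq_h[OF o r]] by (simp add: nsq_cnj)
    show ?thesis
      using indep_fact[OF A dep_mult[OF dn dep_cnj[OF dh[OF r]]] dW[OF r] i Wm(1)[OF r]] Wm(2)[OF r] by simp
  qed
  have eX1: "\<And>\<omega>. nsq l k m \<omega> * cnj (Y \<omega>) = (\<Sum>r<Nt. (nsq l k m \<omega> * h l k m r \<omega>) * cnj (?W r \<omega>))"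
    unfolding Y_def cnj_sum sum_distrib_left by (intro sum.cong refl) (simp add: algebra_simps)
  have eX2: "\<And>\<omega>. Y \<omega> * nsq l k m \<omega> = (\<Sum>r<Nt. (nsq l k m \<omega> * cnj (h l k m r \<omega>)) * ?W r \<omega>)"
    unfolding Y_def sum_distrib_right by (intro sum.cong refl) (simp add: algebra_simps)
  have iX1: "integrable M (\<lambda>\<omega>. nsq l k m \<omega> * cnj (Y \<omega>))" and EX1: "(\<integral>\<omega>. nsq l k m \<omega> * cnj (Y \<omega>) \<partial>M) = 0"
    unfolding eX1 using X1 by (auto intro!: Bochner_Integration.integrable_sum simp: Bochner_Integration.integral_sum)
  have iX2: "integrable M (\<lambda>\<omega>. Y \<omega> * nsq l k m \<omega>)" and EX2: "(\<integral>\<omega>. Y \<omega> * nsq l k m \<omega> \<partial>M) = 0"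
    unfolding eX2 using X2 by (auto intro!: Bochner_Integration.integrable_sum simp: Bochner_Integration.integral_sum)
  have eTT: "\<And>\<omega>. T \<omega> * cnj (T \<omega>) = complex_of_real (c\<^sup>2) * (nsq l k m \<omega> * nsq l k m \<omega>)
     + complex_of_real c * (nsq l k m \<omega> * cnj (Y \<omega>)) + complex_of_real c * (Y \<omega> * nsq l k m \<omega>) + Y \<omega> * cnj (Y \<omega>)"
    unfolding Te by (simp add: nsq_cnj algebra_simps power2_eq_square)
  show "integrable M (\<lambda>\<omega>. T \<omega> * cnj (T \<omega>))"
    unfolding eTT using nsq2(1)[OF o] iX1 iX2 iYY by auto
  show "(\<integral>\<omega>. T \<omega> * cnj (T \<omega>) \<partial>M) = complex_of_real (c\<^sup>2 * (real Nt * real Nt + real Nt) + real Nt * D)"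
    unfolding eTT using nsq2[OF o] iX1 iX2 iYY EX1 EX2 EYY by simp
qed


lemma users_sum: "(\<Sum>b\<in>users L K. f b) = (\<Sum>i=1..L. \<Sum>j=1..K. f (i,j))"
  unfolding users_def by (simp add: sum.cartesian_product)

lemma delta_split:
  fixes q eta :: "nat \<Rightarrow> nat \<Rightarrow> nat \<Rightarrow> real"
  assumes lk: "(l,k) \<in> users L K" and mn: "(m,n) \<in> users L K" and qn: "(\<Sum>t<tau. (q m n t)\<^sup>2) = 1"
    and eo: "eta m n m = 1"
  shows "delta L K tau q eta sn m n = (coef q eta m n (l,k))\<^sup>2 + ((\<Sum>b\<in>users L K - {(l,k)}. (coef q eta m n b)\<^sup>2) + (sn m)\<^sup>2)"
proof -
  have r1: "rho tau q m n m n = 1" using qn by (simp add: rho_def power2_eq_square)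
  have "(\<Sum>b\<in>users L K. (coef q eta m n b)\<^sup>2) = (\<Sum>b\<in>users L K. (eta (fst b) (snd b) m)\<^sup>2 * (rho tau q (fst b) (snd b) m n)\<^sup>2)"
    by (intro sum.cong refl) (auto simp: coef_def r1 eo power_mult_distrib)
  also have "\<dots> = (\<Sum>i=1..L. \<Sum>j=1..K. (eta i j m)\<^sup>2 * (rho tau q i j m n)\<^sup>2)" by (simp add: users_sum)
  finally have "(\<Sum>b\<in>users L K. (coef q eta m n b)\<^sup>2) = (\<Sum>i=1..L. \<Sum>j=1..K. (eta i j m)\<^sup>2 * (rho tau q i j m n)\<^sup>2)" .
  moreover have "(\<Sum>b\<in>users L K. (coef q eta m n b)\<^sup>2) = (coef q eta m n (l,k))\<^sup>2 + (\<Sum>b\<in>users L K - {(l,k)}. (coef q eta m n b)\<^sup>2)"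
    using sum.remove[OF fin_users lk] by simp
  ultimately show ?thesis unfolding delta_def by simp
qed

lemma delta_ge1:
  fixes q eta :: "nat \<Rightarrow> nat \<Rightarrow> nat \<Rightarrow> real"
  assumes mn: "(m,n) \<in> users L K" and qn: "(\<Sum>t<tau. (q m n t)\<^sup>2) = 1" and eo: "eta m n m = 1"
  shows "delta L K tau q eta sn m n \<ge> 1"
proof -
  have "delta L K tau q eta sn m n = (coef q eta m n (m,n))\<^sup>2 + ((\<Sum>b\<in>users L K - {(m,n)}. (coef q eta m n b)\<^sup>2) + (sn m)\<^sup>2)"
    by (rule delta_split[where l=m and k=n and m=m and n=n and q=q and eta=eta, OF mn mn qn eo])
  moreover have "(coef q eta m n (m,n))\<^sup>2 = 1" by (simp add: coef_def)
  moreover have "(\<Sum>b\<in>users L K - {(m,n)}. (coef q eta m n b)\<^sup>2) \<ge> 0" by (intro sum_nonneg) auto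
  ultimately show ?thesis by simp
qed

lemma X_stats:
  fixes q eta :: "nat \<Rightarrow> nat \<Rightarrow> nat \<Rightarrow> real"
  assumes lk: "(l,k) \<in> users L K" and mn: "(m,n) \<in> users L K" and qn: "(\<Sum>t<tau. (q m n t)\<^sup>2) = 1"
    and eo: "eta m n m = 1" and Nt: "Nt > 0"
  defines "X \<equiv> hHa L K Nt tau h nz q eta sn l k m n"
  defines "c \<equiv> coef q eta m n (l,k)"
  defines "d \<equiv> delta L K tau q eta sn m n"
  shows "integrable M X" "integrable M (\<lambda>\<omega>. X \<omega> * cnj (X \<omega>))"
    "(cmod (integral\<^sup>L M X))\<^sup>2 = c\<^sup>2 * real Nt / d"
    "(\<integral>\<omega>. (cmod (X \<omega>))\<^sup>2 \<partial>M) = c\<^sup>2 * real Nt / d + 1"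
proof -
  define T where "T = (\<lambda>\<omega>. \<Sum>r<Nt. cnj (h l k m r \<omega>) * ghat L K Nt tau h nz q eta m n r \<omega>)"
  define D where "D = (\<Sum>b\<in>users L K - {(l,k)}. (coef q eta m n b)\<^sup>2) + (sn m)\<^sup>2"
  note TS0 = T_stats[where l=l and k=k and m=m and n=n and q=q and eta=eta, OF lk mn qn]
  have TS: "integrable M T" "integral\<^sup>L M T = complex_of_real (c * real Nt)"
    "integrable M (\<lambda>\<omega>. T \<omega> * cnj (T \<omega>))"
    "(\<integral>\<omega>. T \<omega> * cnj (T \<omega>) \<partial>M) = complex_of_real (c\<^sup>2 * (real Nt * real Nt + real Nt) + real Nt * D)"
    using TS0 unfolding T_def c_def D_def by simp_all
  have dd: "d = c\<^sup>2 + D" unfolding d_def c_def D_def by (rule delta_split[where l=l and k=k and m=m and n=n and q=q and eta=eta, OF lk mn qn eo])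
  have d1: "d \<ge> 1" unfolding d_def by (rule delta_ge1[where m=m and n=n and q=q and eta=eta, OF mn qn eo])
  define s where "s = sqrt (real Nt * d)"
  have s0: "s > 0" unfolding s_def using Nt d1 by simp
  have ss: "s * s = real Nt * d" unfolding s_def using Nt d1 by simp
  have Xe: "X = (\<lambda>\<omega>. T \<omega> / complex_of_real s)"
    unfolding X_def hHa_def[abs_def] precoder_def T_def s_def d_def by (simp add: sum_divide_distrib)
  have XX: "\<And>\<omega>. X \<omega> * cnj (X \<omega>) = (T \<omega> * cnj (T \<omega>)) / complex_of_real (s * s)"
    unfolding Xe by simp
  show "integrable M X" unfolding Xe by (rule integrable_divide_zero) (rule TS(1))
  show iXX: "integrable M (\<lambda>\<omega>. X \<omega> * cnj (X \<omega>))" unfolding XX by (rule integrable_divide_zero) (rule TS(3))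
  have "integral\<^sup>L M X = complex_of_real (c * real Nt / s)" unfolding Xe using TS(2) by simp
  then have "(cmod (integral\<^sup>L M X))\<^sup>2 = (c * real Nt / s)\<^sup>2"
    by (simp only: norm_of_real power2_abs)
  also have "\<dots> = c\<^sup>2 * (real Nt * real Nt) / (s * s)" by (simp add: power_divide power_mult_distrib power2_eq_square)
  also have "\<dots> = c\<^sup>2 * real Nt / d" unfolding ss using Nt d1 by (simp add: field_simps)
  finally show "(cmod (integral\<^sup>L M X))\<^sup>2 = c\<^sup>2 * real Nt / d" .
  have "complex_of_real (\<integral>\<omega>. (cmod (X \<omega>))\<^sup>2 \<partial>M) = (\<integral>\<omega>. X \<omega> * cnj (X \<omega>) \<partial>M)"
    unfolding integral_complex_of_real[symmetric] complex_norm_square ..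
  also have "\<dots> = complex_of_real ((c\<^sup>2 * (real Nt * real Nt + real Nt) + real Nt * D) / (s * s))"
    unfolding XX using TS(4) by simp
  finally have "(\<integral>\<omega>. (cmod (X \<omega>))\<^sup>2 \<partial>M) = (c\<^sup>2 * (real Nt * real Nt + real Nt) + real Nt * D) / (s * s)"
    by (simp only: of_real_eq_iff)
  also have "\<dots> = c\<^sup>2 * real Nt / d + 1"
  proof -
    have nz: "real Nt * d \<noteq> 0" using Nt d1 by simp
    have "(c\<^sup>2 * real Nt / d + 1) * (real Nt * d) = c\<^sup>2 * real Nt * real Nt + real Nt * d"
      using d1 by (simp add: field_simps)
    also have "\<dots> = c\<^sup>2 * (real Nt * real Nt + real Nt) + real Nt * D" unfolding dd by (simp add: algebra_simps)
    finally show ?thesis unfolding ss using nz by (simp add: divide_eq_eq)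
  qed
  finally show "(\<integral>\<omega>. (cmod (X \<omega>))\<^sup>2 \<partial>M) = c\<^sup>2 * real Nt / d + 1" .
qed

end

theorem lemma1:
  fixes M :: "'a measure" and L K Nt tau :: nat
    and h :: "nat \<Rightarrow> nat \<Rightarrow> nat \<Rightarrow> nat \<Rightarrow> 'a \<Rightarrow> complex"
    and nz :: "nat \<Rightarrow> nat \<Rightarrow> 'a \<Rightarrow> complex"
    and sn :: "nat \<Rightarrow> real"
    and q :: "nat \<Rightarrow> nat \<Rightarrow> nat \<Rightarrow> real"
    and eta beta :: "nat \<Rightarrow> nat \<Rightarrow> nat \<Rightarrow> real"
    and P :: "nat \<Rightarrow> nat \<Rightarrow> real" and sw2 :: real and l k :: nat
  assumes "prob_space M"
    and "L > 0" and "K > 0" and "Nt > 0" and "tau > 0"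
    and indep: "prob_space.indep_vars M (block_space Nt tau) (block_rv Nt tau h nz) (blocks L K)"
    and chan: "\<forall>i\<in>{1..L}. \<forall>j\<in>{1..K}. \<forall>m\<in>{1..L}.
        distr M (Pi\<^sub>M {..<Nt} (\<lambda>_. borel)) (\<lambda>\<omega>. restrict (\<lambda>r. h i j m r \<omega>) {..<Nt})
          = Pi\<^sub>M {..<Nt} (\<lambda>_. cn_std)"
    and noise_mean: "\<forall>m\<in>{1..L}. \<forall>a<tau * Nt.
        integrable M (nz m a) \<and> (\<integral>\<omega>. nz m a \<omega> \<partial>M) = 0"
    and noise_cov: "\<forall>m\<in>{1..L}. \<forall>a<tau * Nt. \<forall>b<tau * Nt.
        integrable M (\<lambda>\<omega>. nz m a \<omega> * cnj (nz m b \<omega>)) \<and>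
        (\<integral>\<omega>. nz m a \<omega> * cnj (nz m b \<omega>) \<partial>M) = (if a = b then complex_of_real ((sn m)\<^sup>2) else 0)"
    and pilots: "\<forall>i\<in>{1..L}. \<forall>j\<in>{1..K}. (\<Sum>t<tau. (q i j t)\<^sup>2) = 1"
    and eta_nonneg: "\<forall>i\<in>{1..L}. \<forall>j\<in>{1..K}. \<forall>m\<in>{1..L}. eta i j m \<ge> 0"
    and eta_own: "\<forall>i\<in>{1..L}. \<forall>j\<in>{1..K}. eta i j i = 1"
    and beta_pos: "\<forall>i\<in>{1..L}. \<forall>j\<in>{1..K}. \<forall>m\<in>{1..L}. beta i j m > 0"
    and P_pos: "\<forall>m\<in>{1..L}. \<forall>n\<in>{1..K}. P m n > 0"
    and "sw2 \<ge> 0"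
    and "l \<in> {1..L}" and "k \<in> {1..K}"
  shows "sinr M L K Nt tau h nz q eta sn beta P sw2 l k =
     beta l k l * P l k /
     (delta L K tau q eta sn l k *
       ((\<Sum>(m, n)\<in>users L K - {(l, k)}.
           (rho tau q l k m n)\<^sup>2 * (eta l k m)\<^sup>2 * beta l k m * P m n / delta L K tau q eta sn m n)
        + 1 / real Nt * ((\<Sum>m=1..L. \<Sum>n=1..K. beta l k m * P m n) + sw2)))"
  proof -
  interpret S: sys M L K Nt tau h nz sn
    by (rule sys.intro[OF assms(1) indep chan noise_mean noise_cov])
  have lk: "(l,k) \<in> users L K" using assms by (auto simp: users_def)
  have Ntp: "Nt > 0" using assms by simp
  let ?U = "users L K - {(l,k)}"
  have qn: "\<And>m n. (m,n) \<in> users L K \<Longrightarrow> (\<Sum>t<tau. (q m n t)\<^sup>2) = 1" using pilots by (auto simp: users_def)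
  have eo: "\<And>m n. (m,n) \<in> users L K \<Longrightarrow> eta m n m = 1" using eta_own by (auto simp: users_def)
  define d where "d = (\<lambda>m n. delta L K tau q eta sn m n)"
  have d1: "\<And>m n. (m,n) \<in> users L K \<Longrightarrow> d m n \<ge> 1"
    unfolding d_def using S.delta_ge1 qn eo by blast
  note XO = S.X_stats[where l=l and k=k and m=l and n=k and q=q and eta=eta, OF lk lk qn[OF lk] eo[OF lk] Ntp]
  have c1: "S.coef q eta l k (l,k) = 1" by (simp add: S.coef_def)
  have EO: "(cmod (\<integral>\<omega>. hHa L K Nt tau h nz q eta sn l k l k \<omega> \<partial>M))\<^sup>2 = real Nt / d l k"
    using XO(3) c1 unfolding d_def by simp
  have VO: "cvar M (hHa L K Nt tau h nz q eta sn l k l k) = 1"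
    using cvar_alt[OF assms(1) XO(1) XO(2)] XO(3) XO(4) by simp
  have EI: "(\<integral>\<omega>. (cmod (hHa L K Nt tau h nz q eta sn l k m n \<omega>))\<^sup>2 \<partial>M) =
      (rho tau q l k m n)\<^sup>2 * (eta l k m)\<^sup>2 * real Nt / d m n + 1" if mn: "(m,n) \<in> ?U" for m n
  proof -
    have mn': "(m,n) \<in> users L K" using mn by simp
    have "S.coef q eta m n (l,k) = eta l k m * rho tau q l k m n" using mn by (auto simp: S.coef_def)
    then show ?thesis
      using S.X_stats(4)[where l=l and k=k and m=m and n=n and q=q and eta=eta, OF lk mn' qn[OF mn'] eo[OF mn'] Ntp]
      unfolding d_def by (simp add: power_mult_distrib mult_ac)
  qed
  define Q where "Q = (\<Sum>(m, n)\<in>?U. (rho tau q l k m n)\<^sup>2 * (eta l k m)\<^sup>2 * beta l k m * P m n / d m n)"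
  define S1 where "S1 = (\<Sum>(m, n)\<in>?U. beta l k m * P m n)"
  define B where "B = beta l k l * P l k"
  have Bp: "B > 0" unfolding B_def using beta_pos P_pos assms by auto
  have S1n: "S1 \<ge> 0" unfolding S1_def
  proof (intro sum_nonneg)
    fix x assume "x \<in> ?U"
    then have "beta l k (fst x) > 0" "P (fst x) (snd x) > 0" using beta_pos P_pos assms by (auto simp: users_def)
    then show "0 \<le> (case x of (m, n) \<Rightarrow> beta l k m * P m n)" by (simp add: case_prod_beta)
  qed
  have Pall: "(\<Sum>m=1..L. \<Sum>n=1..K. beta l k m * P m n) = B + S1"
  proof -
    have "(\<Sum>m=1..L. \<Sum>n=1..K. beta l k m * P m n) = (\<Sum>b\<in>users L K. beta l k (fst b) * P (fst b) (snd b))"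
      by (simp add: S.users_sum)
    also have "\<dots> = B + S1" unfolding B_def S1_def
      using sum.remove[OF S.fin_users lk, of "\<lambda>b. beta l k (fst b) * P (fst b) (snd b)"]
      by (simp add: case_prod_beta')
    finally show ?thesis .
  qed
  have den: "(\<Sum>(m, n)\<in>?U. (\<integral>\<omega>. (cmod (hHa L K Nt tau h nz q eta sn l k m n \<omega>))\<^sup>2 \<partial>M) * beta l k m * P m n)
     = real Nt * Q + S1"
  proof -
    have "(\<Sum>(m, n)\<in>?U. (\<integral>\<omega>. (cmod (hHa L K Nt tau h nz q eta sn l k m n \<omega>))\<^sup>2 \<partial>M) * beta l k m * P m n)
       = (\<Sum>(m, n)\<in>?U. real Nt * ((rho tau q l k m n)\<^sup>2 * (eta l k m)\<^sup>2 * beta l k m * P m n / d m n) + beta l k m * P m n)"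
    proof (intro sum.cong refl)
      fix x assume x: "x \<in> ?U"
      obtain m n where xe: "x = (m,n)" by (cases x)
      have e: "(\<integral>\<omega>. (cmod (hHa L K Nt tau h nz q eta sn l k m n \<omega>))\<^sup>2 \<partial>M) =
        (rho tau q l k m n)\<^sup>2 * (eta l k m)\<^sup>2 * real Nt / d m n + 1" using EI x xe by blast
      show "(case x of (m, n) \<Rightarrow> (\<integral>\<omega>. (cmod (hHa L K Nt tau h nz q eta sn l k m n \<omega>))\<^sup>2 \<partial>M) * beta l k m * P m n) =
        (case x of (m, n) \<Rightarrow> real Nt * ((rho tau q l k m n)\<^sup>2 * (eta l k m)\<^sup>2 * beta l k m * P m n / d m n) + beta l k m * P m n)"
        unfolding xe using e by (simp add: algebra_simps)
    qed
    also have "\<dots> = real Nt * Q + S1" unfolding Q_def S1_def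
      by (simp add: sum.distrib sum_distrib_left case_prod_beta')
    finally show ?thesis .
  qed
  have dl: "d l k \<ge> 1" using d1[OF lk] .
  have pos: "B + S1 + sw2 > 0" using Bp S1n assms by simp
  have Qn: "Q \<ge> 0" unfolding Q_def
  proof (intro sum_nonneg)
    fix x assume x: "x \<in> ?U"
    then have "d (fst x) (snd x) \<ge> 1" using d1[of "fst x" "snd x"] by simp
    moreover have "beta l k (fst x) > 0" "P (fst x) (snd x) > 0" using x beta_pos P_pos assms by (auto simp: users_def)
    ultimately show "0 \<le> (case x of (m, n) \<Rightarrow> (rho tau q l k m n)\<^sup>2 * (eta l k m)\<^sup>2 * beta l k m * P m n / d m n)"
      by (simp add: case_prod_beta)
  qed
  have "sinr M L K Nt tau h nz q eta sn beta P sw2 l k =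
      real Nt / d l k * beta l k l * P l k / (1 * beta l k l * P l k + (real Nt * Q + S1) + sw2)"
    unfolding sinr_def EO VO den by (rule refl)
  also have "\<dots> = (real Nt / d l k * B) / (B + real Nt * Q + S1 + sw2)"
    unfolding B_def by (simp add: mult.assoc add.assoc)
  also have "\<dots> = B / (d l k * (Q + 1 / real Nt * (B + S1 + sw2)))"
  proof -
    have n0: "real Nt > 0" using Ntp by simp
    have d0: "d l k > 0" using dl by simp
    have "real Nt * Q \<ge> 0" using Qn n0 by simp
    then have p0: "B + real Nt * Q + S1 + sw2 > 0" using pos by linarith
    have "d l k * (Q + 1 / real Nt * (B + S1 + sw2)) = d l k * (B + real Nt * Q + S1 + sw2) / real Nt"
      using n0 by (simp add: field_simps)
    then show ?thesis using n0 d0 p0 by simp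
  qed
  finally have F: "sinr M L K Nt tau h nz q eta sn beta P sw2 l k = B / (d l k * (Q + 1 / real Nt * (B + S1 + sw2)))" .
  show ?thesis using F Pall unfolding Q_def d_def B_def by simp
qed


end
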